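(* Let $K$ be an algebraically closed field of characteristic zero, $\mathcal{K} = K(t)$, $f(z) = z^2+t$, $\alpha \in \mathcal{K}$, and $N \ge 1$. The following are equivalent: (A) $\alpha$ does not realize portrait $(1,N)$ for $f$; (B) for every place $\mathfrak{p}$ of $\mathcal{K}$ at which $\Phi_N(-\alpha,t)$ vanishes, either $\Phi_n(-\alpha,t)$ also vanishes at $\mathfrak{p}$ for some proper divisor $n$ of $N$, or $\alpha$ also vanishes at $\mathfrak{p}$.
   Context: Places of $\mathcal{K}$ are those trivial on $K$, corresponding to $c \in \mathbb{P}^1(K)$; an element vanishes at a place if its valuation there is positive. The $n$th dynatomic polynomial of $f$ is $\Phi_n(z,t) := \prod_{m\mid n}(f^m(z)-z)^{\mu(n/m)} \in \mathbb{Z}[z,t]$, $\mu$ the Möbius function. For $c\in K$, $f_c(z) = z^2+c$. A point $x$ has preperiodic portrait $(M,N)$ for $\phi$ if $M\ge0$ is minimal with $\phi^M(x)$ periodic and $\phi^M(x)$ has exact period $N$. We say $\alpha$ realizes portrait $(M,N)$ for $f$ if there exists $c \in K$ such that $\alpha(c)$ (reduction modulo the place $t=c$) has portrait $(M,N)$ for $f_c$. *)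

theory Defs
  imports "HOL-Computational_Algebra.Computational_Algebra"
begin

text \<open>The rational function field K(t) is rendered as 'a poly fract.\<close>

definition tvar :: "'a::field poly fract" where
  "tvar = Fract [:0, 1:] 1"

definition moebius :: "nat \<Rightarrow> int" where
  "moebius n = (if squarefree n then (-1) ^ card (prime_factors n) else 0)"

fun fiter :: "nat \<Rightarrow> 'a::field poly fract poly" where
  "fiter 0 = [:0, 1:]"
| "fiter (Suc m) = (fiter m)\<^sup>2 + [:tvar:]"

text \<open>Dynatomic polynomial Phi_n(z,t) = prod_{m | n} (f^m(z) - z)^(mu(n/m)), as a polynomial
  in z over K(t): the product of the factors with exponent +1 divided (exactly) by the
  product of the factors with exponent -1.\<close>
definition dynatomic :: "nat \<Rightarrow> 'a::field poly fract poly" where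
  "dynatomic n =
     (\<Prod>m\<in>{m. m dvd n \<and> moebius (n div m) = 1}. fiter m - [:0, 1:]) div
     (\<Prod>m\<in>{m. m dvd n \<and> moebius (n div m) = -1}. fiter m - [:0, 1:])"

text \<open>Places of K(t) trivial on K: t = c for c in K, or infinity.\<close>
datatype 'a place = Fin 'a | Inf

definition place_val :: "'a::field place \<Rightarrow> 'a poly fract \<Rightarrow> int" where
  "place_val P x = (THE v. \<exists>p q. p \<noteq> 0 \<and> q \<noteq> 0 \<and> x = Fract p q \<and>
      v = (case P of Fin c \<Rightarrow> int (order c p) - int (order c q)
                   | Inf \<Rightarrow> int (degree q) - int (degree p)))"

definition vanishes_at :: "'a::field place \<Rightarrow> 'a poly fract \<Rightarrow> bool" where
  "vanishes_at P x \<longleftrightarrow> x = 0 \<or> place_val P x > 0"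

definition is_periodic :: "('b \<Rightarrow> 'b) \<Rightarrow> 'b \<Rightarrow> bool" where
  "is_periodic \<phi> y \<longleftrightarrow> (\<exists>n>0. (\<phi> ^^ n) y = y)"

definition exact_period :: "('b \<Rightarrow> 'b) \<Rightarrow> 'b \<Rightarrow> nat \<Rightarrow> bool" where
  "exact_period \<phi> y N \<longleftrightarrow> N > 0 \<and> (\<phi> ^^ N) y = y \<and> (\<forall>n. 0 < n \<and> n < N \<longrightarrow> (\<phi> ^^ n) y \<noteq> y)"

definition has_portrait :: "('b \<Rightarrow> 'b) \<Rightarrow> 'b \<Rightarrow> nat \<Rightarrow> nat \<Rightarrow> bool" where
  "has_portrait \<phi> x M N \<longleftrightarrow>
     is_periodic \<phi> ((\<phi> ^^ M) x) \<and> (\<forall>k<M. \<not> is_periodic \<phi> ((\<phi> ^^ k) x)) \<and>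
     exact_period \<phi> ((\<phi> ^^ M) x) N"

definition realizes_portrait :: "'a::field poly fract \<Rightarrow> nat \<Rightarrow> nat \<Rightarrow> bool" where
  "realizes_portrait \<alpha> M N \<longleftrightarrow>
     (\<exists>c p q. q \<noteq> 0 \<and> poly q c \<noteq> 0 \<and> \<alpha> = Fract p q \<and>
        has_portrait (\<lambda>z. z\<^sup>2 + c) (poly p c / poly q c) M N)"

end

theory Submission
  imports Defs "HOL-Computational_Algebra.Field_as_Ring"
begin


definition V :: "'a::field place \<Rightarrow> 'a poly \<Rightarrow> 'a poly \<Rightarrow> int" where
  "V P p q = (case P of Fin c \<Rightarrow> int (order c p) - int (order c q)
                   | Inf \<Rightarrow> int (degree q) - int (degree p))"

lemma V_cong:
  assumes "p \<noteq> 0" "q \<noteq> 0" "p' \<noteq> 0" "q' \<noteq> 0" "p * q' = p' * q"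
  shows "V P p q = V P p' q'"
proof (cases P)
  case (Fin c)
  have "order c (p * q') = order c (p' * q)" using assms by simp
  hence "order c p + order c q' = order c p' + order c q"
    using assms order_mult[of p q' c] order_mult[of p' q c] by simp
  thus ?thesis using Fin by (simp add: V_def)
next
  case Inf
  have e: "degree (p * q') = degree (p' * q)" using assms by simp
  have "degree (p * q') = degree p + degree q'" by (rule degree_mult_eq[OF assms(1,4)])
  moreover have "degree (p' * q) = degree p' + degree q" by (rule degree_mult_eq[OF assms(3,2)])
  ultimately have "degree p + degree q' = degree p' + degree q" using e by simp
  thus ?thesis using Inf by (simp add: V_def)
qed

lemma pv_Fract:
  assumes "p \<noteq> 0" "q \<noteq> 0"
  shows "place_val P (Fract p q) = V P p q"
  unfolding place_val_def
proof (rule the_equality)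
  show "\<exists>p' q'. p' \<noteq> 0 \<and> q' \<noteq> 0 \<and> Fract p q = Fract p' q' \<and> V P p q =
     (case P of Fin c \<Rightarrow> int (order c p') - int (order c q') | Inf \<Rightarrow> int (degree q') - int (degree p'))"
    using assms by (intro exI[of _ p] exI[of _ q]) (auto simp: V_def)
next
  fix v assume "\<exists>p' q'. p' \<noteq> 0 \<and> q' \<noteq> 0 \<and> Fract p q = Fract p' q' \<and> v =
     (case P of Fin c \<Rightarrow> int (order c p') - int (order c q') | Inf \<Rightarrow> int (degree q') - int (degree p'))"
  then obtain p' q' where h: "p' \<noteq> 0" "q' \<noteq> 0" "Fract p q = Fract p' q'" "v = V P p' q'"
    by (auto simp: V_def)
  have "p * q' = p' * q" using h(3) assms h by (simp add: eq_fract)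
  thus "v = V P p q" using V_cong[of p q p' q' P] assms h by simp
qed

lemma fract_rep:
  obtains p q where "x = Fract p q" "q \<noteq> 0" "x \<noteq> 0 \<Longrightarrow> p \<noteq> 0"
proof (cases x)
  case (Fract a b)
  thus ?thesis using that[of a b] by (auto simp: Zero_fract_def eq_fract)
qed

lemma pv_mult:
  fixes x y :: "'a::field poly fract"
  assumes "x \<noteq> 0" "y \<noteq> 0"
  shows "place_val P (x * y) = place_val P x + place_val P y"
proof -
  obtain p q where x: "x = Fract p q" "q \<noteq> 0" "p \<noteq> 0" using fract_rep[of x] assms by metis
  obtain r s where y: "y = Fract r s" "s \<noteq> 0" "r \<noteq> 0" using fract_rep[of y] assms by metis
  have "x * y = Fract (p * r) (q * s)" using x y by simp
  thus ?thesis using x y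
    by (cases P) (simp_all add: pv_Fract V_def order_mult degree_mult_eq)
qed

lemma pv_uminus: "place_val P (- (x::'a::field poly fract)) = place_val P x"
proof (cases "x = 0")
  case True thus ?thesis by simp
next
  case False
  obtain p q where x: "x = Fract p q" "q \<noteq> 0" "p \<noteq> 0" using fract_rep[of x] False by metis
  thus ?thesis by (cases P) (simp_all add: pv_Fract V_def)
qed

lemma order_add_lt:
  fixes A B :: "'a::field poly"
  assumes "A \<noteq> 0" "B \<noteq> 0" "order c A < order c B"
  shows "A + B \<noteq> 0 \<and> order c (A + B) = order c A"
proof -
  let ?X = "[:-c, 1:]"
  have dA: "?X ^ order c A dvd A" by (rule order_1)
  have dB: "?X ^ Suc (order c A) dvd B" by (subst order_divides) (use assms in auto)
  have nA: "\<not> ?X ^ Suc (order c A) dvd A" by (subst order_divides) (use assms in auto)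
  have "?X ^ order c A dvd ?X ^ Suc (order c A)" by (rule le_imp_power_dvd) simp
  hence dB': "?X ^ order c A dvd B" using dB by (rule dvd_trans)
  have nsum: "\<not> ?X ^ Suc (order c A) dvd A + B"
  proof
    assume "?X ^ Suc (order c A) dvd A + B"
    hence "?X ^ Suc (order c A) dvd (A + B) - B" using dB by (rule dvd_diff)
    thus False using nA by simp
  qed
  hence ne: "A + B \<noteq> 0" by auto
  have "?X ^ order c A dvd A + B" using dA dB' by (rule dvd_add)
  hence "order c A \<le> order c (A + B)" using ne by (simp add: order_divides)
  moreover have "\<not> Suc (order c A) \<le> order c (A + B)" using nsum ne order_divides[of c "Suc (order c A)" "A+B"] by blast
  ultimately show ?thesis using ne by simp
qed

lemma pv_add_lt:
  fixes x y :: "'a::field poly fract"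
  assumes "x \<noteq> 0" "y \<noteq> 0" "place_val P x < place_val P y"
  shows "x + y \<noteq> 0 \<and> place_val P (x + y) = place_val P x"
proof -
  obtain p q where x: "x = Fract p q" "q \<noteq> 0" "p \<noteq> 0" using fract_rep[of x] assms by metis
  obtain r s where y: "y = Fract r s" "s \<noteq> 0" "r \<noteq> 0" using fract_rep[of y] assms by metis
  have sum: "x + y = Fract (p * s + r * q) (q * s)" using x y by simp
  show ?thesis
  proof (cases P)
    case (Fin c)
    have "order c (p * s) < order c (r * q)"
      using assms(3) x y Fin by (simp add: pv_Fract V_def order_mult)
    from order_add_lt[OF _ _ this] x y
    have h: "p * s + r * q \<noteq> 0" "order c (p * s + r * q) = order c (p * s)" by auto
    hence "x + y \<noteq> 0" using sum x y by (simp add: Zero_fract_def eq_fract)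
    thus ?thesis using sum h x y Fin by (simp add: pv_Fract V_def order_mult)
  next
    case Inf
    have lt: "degree (r * q) < degree (p * s)"
      using assms(3) x y Inf by (simp add: pv_Fract V_def degree_mult_eq)
    hence h: "degree (p * s + r * q) = degree (p * s)" by (rule degree_add_eq_left)
    have nz: "p * s + r * q \<noteq> 0" using lt h by (metis degree_0 not_less0)
    hence "x + y \<noteq> 0" using sum x y by (simp add: Zero_fract_def eq_fract)
    moreover have "place_val P (x + y) = V P (p * s + r * q) (q * s)"
      using sum pv_Fract[OF nz, of "q*s" P] x y by simp
    ultimately show ?thesis using h x y Inf by (simp add: pv_Fract V_def degree_mult_eq)
  qed
qed

lemma pv_prod:
  fixes g :: "nat \<Rightarrow> 'a::field poly fract"
  assumes "finite A" "\<And>i. i \<in> A \<Longrightarrow> g i \<noteq> 0"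
  shows "prod g A \<noteq> 0 \<and> place_val P (prod g A) = (\<Sum>i\<in>A. place_val P (g i))"
  using assms
proof (induction A rule: finite_induct)
  case empty
  have "place_val P (1::'a poly fract) = 0"
    using pv_Fract[of 1 1 P] by (simp add: V_def One_fract_def split: place.split)
  thus ?case by simp
next
  case (insert i A)
  thus ?case by (simp add: pv_mult)
qed

lemma pv_one: "place_val P (1::'a::field poly fract) = 0"
  using pv_Fract[of 1 1 P] by (simp add: V_def One_fract_def split: place.split)

lemma pv_power:
  fixes x :: "'a::field poly fract"
  assumes "x \<noteq> 0"
  shows "place_val P (x ^ n) = int n * place_val P x"
  using assms by (induction n) (simp_all add: pv_one pv_mult algebra_simps)

lemma tvar_ne: "tvar \<noteq> (0::'a::field poly fract)"
  by (simp add: tvar_def Zero_fract_def eq_fract)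

lemma pv_tvar_Inf: "place_val Inf (tvar::'a::field poly fract) = -1"
  by (simp add: tvar_def pv_Fract V_def)

lemma pv_tvar_Fin: "place_val (Fin c) (tvar::'a::field poly fract) \<ge> 0"
  by (simp add: tvar_def pv_Fract V_def)



definition reg :: "'a::field \<Rightarrow> 'a poly fract \<Rightarrow> bool" where
  "reg c x \<longleftrightarrow> (\<exists>p q. poly q c \<noteq> 0 \<and> x = Fract p q)"

definition ev :: "'a::field \<Rightarrow> 'a poly fract \<Rightarrow> 'a" where
  "ev c x = (if reg c x then (THE v. \<exists>p q. poly q c \<noteq> 0 \<and> x = Fract p q \<and> v = poly p c / poly q c) else 0)"

lemma ev_Fract:
  assumes "poly q c \<noteq> 0"
  shows "reg c (Fract p q) \<and> ev c (Fract p q) = poly p c / poly q c"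
proof -
  have r: "reg c (Fract p q)" using assms unfolding reg_def by blast
  have "(THE v. \<exists>p' q'. poly q' c \<noteq> 0 \<and> Fract p q = Fract p' q' \<and> v = poly p' c / poly q' c)
        = poly p c / poly q c"
  proof (rule the_equality)
    show "\<exists>p' q'. poly q' c \<noteq> 0 \<and> Fract p q = Fract p' q' \<and> poly p c / poly q c = poly p' c / poly q' c"
      using assms by blast
  next
    fix v assume "\<exists>p' q'. poly q' c \<noteq> 0 \<and> Fract p q = Fract p' q' \<and> v = poly p' c / poly q' c"
    then obtain p' q' where h: "poly q' c \<noteq> 0" "Fract p q = Fract p' q'" "v = poly p' c / poly q' c"
      by blast
    have "q \<noteq> 0" "q' \<noteq> 0" using assms h by auto
    hence "p * q' = p' * q" using h by (simp add: eq_fract)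
    hence "poly p c * poly q' c = poly p' c * poly q c" by (metis poly_mult)
    hence "poly p' c / poly q' c = poly p c / poly q c" using h assms
      by (simp add: frac_eq_eq mult.commute)
    thus "v = poly p c / poly q c" using h by simp
  qed
  thus ?thesis using r by (simp add: ev_def)
qed

lemma regE:
  assumes "reg c x"
  obtains p q where "poly q c \<noteq> 0" "x = Fract p q" "ev c x = poly p c / poly q c"
  using assms ev_Fract unfolding reg_def by metis

lemma reg_add: "reg c x \<Longrightarrow> reg c y \<Longrightarrow> reg c (x + y) \<and> ev c (x + y) = ev c x + ev c y"
proof -
  assume "reg c x" "reg c y"
  then obtain p q r s where x: "poly q c \<noteq> 0" "x = Fract p q" "ev c x = poly p c / poly q c"
    and y: "poly s c \<noteq> 0" "y = Fract r s" "ev c y = poly r c / poly s c"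
    by (metis regE)
  have "q \<noteq> 0" "s \<noteq> 0" using x y by auto
  hence "x + y = Fract (p * s + r * q) (q * s)" using x y by simp
  moreover have "poly (q * s) c \<noteq> 0" using x y by simp
  ultimately have "reg c (x + y)" "ev c (x + y) = poly (p * s + r * q) c / poly (q * s) c"
    using ev_Fract[of "q*s" c "p * s + r * q"] by simp_all
  moreover have "poly (p * s + r * q) c / poly (q * s) c = poly p c / poly q c + poly r c / poly s c"
    using x(1) y(1) by (simp add: field_simps)
  ultimately show ?thesis using x(3) y(3) by simp
qed

lemma reg_mult: "reg c x \<Longrightarrow> reg c y \<Longrightarrow> reg c (x * y) \<and> ev c (x * y) = ev c x * ev c y"
proof -
  assume "reg c x" "reg c y"
  then obtain p q r s where x: "poly q c \<noteq> 0" "x = Fract p q" "ev c x = poly p c / poly q c"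
    and y: "poly s c \<noteq> 0" "y = Fract r s" "ev c y = poly r c / poly s c"
    by (metis regE)
  have "x * y = Fract (p * r) (q * s)" using x y by simp
  moreover have "poly (q * s) c \<noteq> 0" using x y by simp
  ultimately have "reg c (x * y)" "ev c (x * y) = poly (p * r) c / poly (q * s) c"
    using ev_Fract[of "q*s" c "p * r"] by simp_all
  moreover have "poly (p * r) c / poly (q * s) c = poly p c / poly q c * (poly r c / poly s c)"
    using x(1) y(1) by (simp add: field_simps)
  ultimately show ?thesis using x(3) y(3) by simp
qed

lemma reg_uminus: "reg c x \<Longrightarrow> reg c (- x) \<and> ev c (- x) = - ev c x"
proof -
  assume "reg c x"
  then obtain p q where x: "poly q c \<noteq> 0" "x = Fract p q" "ev c x = poly p c / poly q c"
    by (metis regE)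
  have "- x = Fract (- p) q" using x by simp
  thus ?thesis using ev_Fract[of q c "- p"] x by simp
qed

lemma reg_diff: "reg c x \<Longrightarrow> reg c y \<Longrightarrow> reg c (x - y) \<and> ev c (x - y) = ev c x - ev c y"
  using reg_add[of c x "- y"] reg_uminus[of c y] by simp

lemma reg_0: "reg c 0 \<and> ev c 0 = 0"
  using ev_Fract[of 1 c 0] by (simp add: Zero_fract_def)

lemma reg_1: "reg c 1 \<and> ev c 1 = 1"
  using ev_Fract[of 1 c 1] by (simp add: One_fract_def)

lemma reg_tvar: "reg c tvar \<and> ev c tvar = c"
  using ev_Fract[of 1 c "[:0,1:]"] by (simp add: tvar_def)

lemma reg_power: "reg c x \<Longrightarrow> reg c (x ^ n) \<and> ev c (x ^ n) = ev c x ^ n"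
  by (induction n) (simp_all add: reg_1 reg_mult)

lemma reg_sum: "(\<And>i. i \<in> A \<Longrightarrow> reg c (g i)) \<Longrightarrow> reg c (sum g A) \<and> ev c (sum g A) = (\<Sum>i\<in>A. ev c (g i))"
proof (induction A rule: infinite_finite_induct)
  case (infinite A) thus ?case by (simp add: reg_0)
next
  case empty thus ?case by (simp add: reg_0)
next
  case (insert i A) thus ?case by (simp add: reg_add)
qed

lemma reg_iff_pv:
  assumes "x \<noteq> 0"
  shows "reg c x \<longleftrightarrow> place_val (Fin c) x \<ge> 0"
proof
  assume "reg c x"
  then obtain p q where x: "poly q c \<noteq> 0" "x = Fract p q" by (metis regE)
  have "p \<noteq> 0" using assms x by (auto simp: Zero_fract_def eq_fract)
  moreover have "q \<noteq> 0" using x by auto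
  ultimately show "place_val (Fin c) x \<ge> 0" using x by (simp add: pv_Fract V_def order_0I)
next
  assume pv: "place_val (Fin c) x \<ge> 0"
  obtain p q where x: "x = Fract p q" "q \<noteq> 0" "p \<noteq> 0" using fract_rep[of x] assms by metis
  have le: "order c q \<le> order c p" using pv x by (simp add: pv_Fract V_def)
  obtain q' where q': "q = [:-c,1:] ^ order c q * q'" "\<not> [:-c,1:] dvd q'"
    using order_decomp[OF x(2)] by blast
  have "[:-c,1:] ^ order c q dvd p" using le by (simp add: order_divides)
  then obtain p' where p': "p = [:-c,1:] ^ order c q * p'" by (elim dvdE)
  have q'0: "q' \<noteq> 0" using q' x by auto
  have "x = Fract p' q'" using x p' q' q'0
    by (simp add: eq_fract)
  moreover have "poly q' c \<noteq> 0" using q' by (simp add: poly_eq_0_iff_dvd)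
  ultimately show "reg c x" unfolding reg_def by blast
qed

lemma reg_pv_pos:
  assumes "reg c x" "x \<noteq> 0"
  shows "place_val (Fin c) x > 0 \<longleftrightarrow> ev c x = 0"
proof -
  obtain p q where x: "poly q c \<noteq> 0" "x = Fract p q" "ev c x = poly p c / poly q c"
    using assms by (metis regE)
  have "p \<noteq> 0" using assms x by (auto simp: Zero_fract_def eq_fract)
  moreover have "q \<noteq> 0" using x by auto
  ultimately show ?thesis using x by (simp add: pv_Fract V_def order_0I order_gt_0_iff)
qed



lemma poly_fiter: "poly (fiter m) z = ((\<lambda>w. w^2 + tvar) ^^ m) z"
  by (induction m) simp_all

lemma reg_fiter:
  "reg c z \<Longrightarrow> reg c (poly (fiter m) z) \<and> ev c (poly (fiter m) z) = ((\<lambda>w. w^2 + c) ^^ m) (ev c z)"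
proof (induction m)
  case 0 thus ?case by simp
next
  case (Suc m)
  thus ?case using reg_power[of c "poly (fiter m) z" 2] reg_tvar[of c]
      reg_add[of c "(poly (fiter m) z)^2" tvar] by simp
qed

lemma pcompose_X_left: "pcompose [:0, 1:] (p::'a::comm_ring_1 poly) = p"
  by (simp add: pcompose_pCons)

lemma fiter_add: "(fiter (m + k) :: 'a::field poly fract poly) = pcompose (fiter k) (fiter m)"
proof (induction k)
  case 0 thus ?case by (simp add: pcompose_X_left)
next
  case (Suc k)
  have "(fiter (m + Suc k) :: 'a poly fract poly) = (fiter (m + k))^2 + [:tvar:]" by simp
  also have "\<dots> = pcompose (fiter k ^ 2 + [:tvar:]) (fiter m)"
    by (simp only: Suc.IH power2_eq_square pcompose_mult pcompose_add pcompose_const)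
  finally show ?case by simp
qed

lemma degree_fiter: "degree (fiter m :: 'a::field poly fract poly) = 2 ^ m \<and> lead_coeff (fiter m :: 'a poly fract poly) = 1"
proof (induction m)
  case 0 thus ?case by simp
next
  case (Suc m)
  have nz: "(fiter m :: 'a poly fract poly) \<noteq> 0"
  proof
    assume "(fiter m :: 'a poly fract poly) = 0"
    hence "lead_coeff (fiter m :: 'a poly fract poly) = 0" by simp
    with Suc show False by simp
  qed
  have d2: "degree ((fiter m :: 'a poly fract poly)^2) = 2 ^ Suc m" using Suc nz by (simp add: degree_power_eq)
  have lt: "degree [:tvar:] < degree ((fiter m :: 'a poly fract poly)^2)" using d2 by simp
  have de: "degree ((fiter m :: 'a poly fract poly)^2 + [:tvar:]) = degree ((fiter m :: 'a poly fract poly)^2)"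
    using lt by (rule degree_add_eq_left)
  have le: "lead_coeff ((fiter m :: 'a poly fract poly)^2 + [:tvar:]) = lead_coeff ((fiter m :: 'a poly fract poly)^2)"
    using lt by (metis add.commute lead_coeff_add_le)
  have l2: "lead_coeff ((fiter m :: 'a poly fract poly)^2) = 1"
    using Suc by (metis lead_coeff_power power_one)
  have "degree (fiter (Suc m) :: 'a poly fract poly) = 2 ^ Suc m" by (simp only: fiter.simps(2) de d2)
  moreover have "lead_coeff (fiter (Suc m) :: 'a poly fract poly) = 1" by (metis fiter.simps(2) le l2)
  ultimately show ?case by blast
qed

definition Fm :: "nat \<Rightarrow> 'a::field poly fract poly" where
  "Fm m = fiter m - [:0, 1:]"

lemma degree_Fm:
  assumes "m \<ge> 1"
  shows "degree (Fm m :: 'a::field poly fract poly) = 2 ^ m \<and> lead_coeff (Fm m :: 'a poly fract poly) = 1 \<and> (Fm m :: 'a poly fract poly) \<noteq> 0"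
proof -
  have "(2::nat) ^ 1 \<le> 2 ^ m" using assms by (intro power_increasing) auto
  hence "1 < degree (fiter m :: 'a poly fract poly)" using degree_fiter[of m, where 'a='a] by simp
  hence lt: "degree (- [:0, 1:] :: 'a poly fract poly) < degree (fiter m :: 'a poly fract poly)" by simp
  have "(Fm m :: 'a poly fract poly) = fiter m + (- [:0,1:])" by (simp add: Fm_def)
  moreover have "degree (fiter m + (- [:0,1:]) :: 'a poly fract poly) = degree (fiter m :: 'a poly fract poly)"
    using lt by (rule degree_add_eq_left)
  moreover have "lead_coeff (fiter m + (- [:0,1:]) :: 'a poly fract poly) = lead_coeff (fiter m :: 'a poly fract poly)"
    using lt by (metis add.commute lead_coeff_add_le)
  ultimately show ?thesis using degree_fiter[of m, where 'a='a] by auto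
qed

definition regp :: "'a::field \<Rightarrow> 'a poly fract poly \<Rightarrow> bool" where
  "regp c h \<longleftrightarrow> (\<forall>i. reg c (coeff h i))"

definition evp :: "'a::field \<Rightarrow> 'a poly fract poly \<Rightarrow> 'a poly" where
  "evp c h = map_poly (ev c) h"

lemma coeff_evp: "coeff (evp c h) i = ev c (coeff h i)"
  unfolding evp_def by (simp add: coeff_map_poly reg_0)

lemma regp_add: "regp c A \<Longrightarrow> regp c B \<Longrightarrow> regp c (A + B) \<and> evp c (A + B) = evp c A + evp c B"
  by (auto simp: regp_def reg_add coeff_evp intro!: poly_eqI)

lemma regp_uminus: "regp c A \<Longrightarrow> regp c (- A) \<and> evp c (- A) = - evp c A"
  by (auto simp: regp_def reg_uminus coeff_evp intro!: poly_eqI)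

lemma regp_diff: "regp c A \<Longrightarrow> regp c B \<Longrightarrow> regp c (A - B) \<and> evp c (A - B) = evp c A - evp c B"
  by (auto simp: regp_def reg_diff coeff_evp intro!: poly_eqI)

lemma regp_mult:
  assumes "regp c A" "regp c B"
  shows "regp c (A * B) \<and> evp c (A * B) = evp c A * evp c B"
proof -
  have h: "reg c (coeff (A * B) n) \<and> ev c (coeff (A * B) n) = coeff (evp c A * evp c B) n" for n
  proof -
    have "reg c (coeff A i * coeff B (n - i)) \<and>
          ev c (coeff A i * coeff B (n - i)) = ev c (coeff A i) * ev c (coeff B (n - i))" for i
      using assms by (simp add: regp_def reg_mult)
    thus ?thesis
      using reg_sum[of "{..n}" c "\<lambda>i. coeff A i * coeff B (n - i)"]
      by (simp add: coeff_mult coeff_evp)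
  qed
  thus ?thesis by (auto simp: regp_def coeff_evp intro!: poly_eqI)
qed

lemma regp_const: "reg c a \<Longrightarrow> regp c [:a:] \<and> evp c [:a:] = [:ev c a:]"
  by (auto simp: regp_def coeff_evp coeff_pCons reg_0 split: nat.split intro!: poly_eqI)

lemma regp_X: "regp c [:0, 1:] \<and> evp c [:0, 1:] = [:0, 1:]"
  by (auto simp: regp_def coeff_evp coeff_pCons reg_0 reg_1 split: nat.split intro!: poly_eqI)

lemma regp_power: "regp c A \<Longrightarrow> regp c (A ^ n) \<and> evp c (A ^ n) = evp c A ^ n"
proof (induction n)
  case 0
  have "(1::'a poly fract poly) = [:1:]" by simp
  thus ?case using regp_const[of c 1] reg_1[of c] by (metis one_pCons power_0)
next
  case (Suc n) thus ?case using regp_mult[of c A "A ^ n"] by simp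
qed

fun citer :: "'a::field \<Rightarrow> nat \<Rightarrow> 'a poly" where
  "citer c 0 = [:0, 1:]"
| "citer c (Suc m) = (citer c m)^2 + [:c:]"

lemma regp_fiter: "regp c (fiter m) \<and> evp c (fiter m) = citer c m"
proof (induction m)
  case 0 thus ?case using regp_X by simp
next
  case (Suc m)
  thus ?case using regp_power[of c "fiter m" 2] regp_const[of c tvar] reg_tvar[of c]
    regp_add[of c "(fiter m)^2" "[:tvar:]"] by simp
qed

lemma regp_Fm: "regp c (Fm m) \<and> evp c (Fm m) = citer c m - [:0,1:]"
  using regp_fiter[of c m] regp_X[of c] regp_diff[of c "fiter m" "[:0,1:]"]
  by (simp add: Fm_def)

lemma citer_0: "citer 0 m = monom 1 (2 ^ m)"
proof (induction m)
  case 0 thus ?case by (simp add: monom_Suc monom_0)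
next
  case (Suc m) thus ?case by (simp add: power2_eq_square mult_monom mult_2)
qed

lemma poly_citer: "poly (citer c m) x = ((\<lambda>w. w^2 + c) ^^ m) x"
  by (induction m) simp_all



definition mv :: "'a::field \<Rightarrow> 'a poly fract poly \<Rightarrow> int" where
  "mv c h = Min ((\<lambda>i. place_val (Fin c) (coeff h i)) ` {i. coeff h i \<noteq> 0})"

lemma fin_nz_coeffs: "finite {i. coeff h i \<noteq> 0}"
  by (rule finite_subset[of _ "{..degree h}"]) (auto intro: le_degree)

lemma mv_le: "coeff h i \<noteq> 0 \<Longrightarrow> mv c h \<le> place_val (Fin c) (coeff h i)"
  unfolding mv_def by (rule Min_le) (auto intro: fin_nz_coeffs)

lemma mv_attained:
  assumes "h \<noteq> 0"
  shows "\<exists>i. coeff h i \<noteq> 0 \<and> place_val (Fin c) (coeff h i) = mv c h"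
proof -
  have ne: "{i. coeff h i \<noteq> 0} \<noteq> {}" using assms by (auto simp: poly_eq_iff)
  have "mv c h \<in> (\<lambda>i. place_val (Fin c) (coeff h i)) ` {i. coeff h i \<noteq> 0}"
    unfolding mv_def by (rule Min_in) (use ne fin_nz_coeffs in auto)
  thus ?thesis by auto
qed

lemma mv_monic: "lead_coeff h = 1 \<Longrightarrow> mv c h \<le> 0"
  using mv_le[of h "degree h" c] pv_one[of "Fin c"] by simp

lemma regp_of_mv: "mv c h \<ge> 0 \<Longrightarrow> regp c h"
  unfolding regp_def
proof
  fix i assume "mv c h \<ge> 0"
  show "reg c (coeff h i)"
  proof (cases "coeff h i = 0")
    case True thus ?thesis by (simp add: reg_0)
  next
    case False
    thus ?thesis using mv_le[OF False, of c] \<open>mv c h \<ge> 0\<close> reg_iff_pv[OF False] by simp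
  qed
qed

definition unif :: "'a::field \<Rightarrow> 'a poly fract" where
  "unif c = Fract [:-c, 1:] 1"

lemma unif_ne: "unif c \<noteq> 0"
  by (simp add: unif_def Zero_fract_def eq_fract)

lemma pv_unif: "place_val (Fin c) (unif c) = 1"
proof -
  have "order c [:-c, 1:] = 1" using order_power_n_n[of c 1] by simp
  thus ?thesis by (simp add: unif_def pv_Fract V_def)
qed

lemma scaled_regp:
  fixes h :: "'a::field poly fract poly" and c :: 'a
  assumes "lead_coeff h = 1"
  defines "a \<equiv> nat (- mv c h)"
  shows "regp c (smult (unif c ^ a) h) \<and> evp c (smult (unif c ^ a) h) \<noteq> 0"
proof -
  have h0: "h \<noteq> 0" using assms by auto
  have a: "int a = - mv c h" using mv_monic[OF assms(1), of c] by (simp add: a_def)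
  have un: "unif c ^ a \<noteq> 0" by (simp add: unif_ne)
  have pvu: "place_val (Fin c) (unif c ^ a) = int a"
    using pv_power[OF unif_ne[of c], of "Fin c" a] pv_unif[of c] by simp
  have r: "reg c (unif c ^ a * coeff h i)" for i
  proof (cases "coeff h i = 0")
    case True thus ?thesis by (simp add: reg_0)
  next
    case False
    have "place_val (Fin c) (unif c ^ a * coeff h i) = int a + place_val (Fin c) (coeff h i)"
      using pv_mult[OF un False] pvu by simp
    moreover have "mv c h \<le> place_val (Fin c) (coeff h i)" using mv_le[OF False] .
    ultimately show ?thesis using reg_iff_pv[of "unif c ^ a * coeff h i" c] un False a by simp
  qed
  hence rp: "regp c (smult (unif c ^ a) h)" by (simp add: regp_def)
  obtain i where i: "coeff h i \<noteq> 0" "place_val (Fin c) (coeff h i) = mv c h"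
    using mv_attained[OF h0] by blast
  have nz: "unif c ^ a * coeff h i \<noteq> 0" using un i by simp
  have "place_val (Fin c) (unif c ^ a * coeff h i) = 0"
    using pv_mult[OF un i(1)] pvu i a by simp
  hence "ev c (unif c ^ a * coeff h i) \<noteq> 0" using reg_pv_pos[OF r nz] by simp
  hence "coeff (evp c (smult (unif c ^ a) h)) i \<noteq> 0" by (simp add: coeff_evp)
  hence "evp c (smult (unif c ^ a) h) \<noteq> 0" by auto
  with rp show ?thesis by simp
qed

lemma gauss_dvr:
  fixes F A B :: "'a::field poly fract poly"
  assumes F: "regp c F" and eq: "F = A * B" and lA: "lead_coeff A = 1" and lB: "lead_coeff B = 1"
  shows "regp c A"
proof -
  define a where "a = nat (- mv c A)"
  define b where "b = nat (- mv c B)"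
  have SA: "regp c (smult (unif c ^ a) A) \<and> evp c (smult (unif c ^ a) A) \<noteq> 0"
    using scaled_regp[OF lA] a_def by simp
  have SB: "regp c (smult (unif c ^ b) B) \<and> evp c (smult (unif c ^ b) B) \<noteq> 0"
    using scaled_regp[OF lB] b_def by simp
  have prod: "smult (unif c ^ (a + b)) F = smult (unif c ^ a) A * smult (unif c ^ b) B"
    using eq by (simp add: power_add mult.commute mult.left_commute)
  have "a + b = 0"
  proof (rule ccontr)
    assume ab: "a + b \<noteq> 0"
    have un: "unif c ^ (a + b) \<noteq> 0" by (simp add: unif_ne)
    have "ev c (unif c ^ (a + b) * coeff F i) = 0" for i
    proof (cases "coeff F i = 0")
      case True thus ?thesis by (simp add: reg_0)
    next
      case False
      have pvF: "place_val (Fin c) (coeff F i) \<ge> 0"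
        using F False reg_iff_pv[OF False, of c] by (simp add: regp_def)
      have "place_val (Fin c) (unif c ^ (a + b) * coeff F i) = int (a + b) + place_val (Fin c) (coeff F i)"
        using pv_mult[OF un False] pv_power[OF unif_ne[of c], of "Fin c" "a + b"] pv_unif[of c] by simp
      hence pos: "place_val (Fin c) (unif c ^ (a + b) * coeff F i) > 0" using pvF ab by linarith
      have nz: "unif c ^ (a + b) * coeff F i \<noteq> 0" using un False by simp
      have "reg c (unif c ^ (a + b) * coeff F i)" using reg_iff_pv[OF nz] pos by simp
      thus ?thesis using reg_pv_pos[OF _ nz] pos by simp
    qed
    hence "evp c (smult (unif c ^ (a + b)) F) = 0" by (auto simp: coeff_evp intro!: poly_eqI)
    moreover have "evp c (smult (unif c ^ a) A * smult (unif c ^ b) B) \<noteq> 0"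
      using regp_mult[of c "smult (unif c ^ a) A" "smult (unif c ^ b) B"] SA SB by simp
    ultimately show False using prod by simp
  qed
  hence "a = 0" by simp
  hence "mv c A \<ge> 0" using a_def by simp
  thus ?thesis by (rule regp_of_mv)
qed

lemma degree_evp_monic:
  assumes "regp c h" "lead_coeff h = 1"
  shows "degree (evp c h) = degree h \<and> lead_coeff (evp c h) = 1"
proof -
  have c1: "coeff (evp c h) (degree h) = 1" using assms by (simp add: coeff_evp reg_1)
  have "\<forall>i>degree h. coeff (evp c h) i = 0" by (simp add: coeff_evp coeff_eq_0 reg_0)
  hence "degree (evp c h) \<le> degree h" by (rule degree_le)
  moreover have "degree h \<le> degree (evp c h)" using c1 by (intro le_degree) simp
  ultimately show ?thesis using c1 by simp
qed

lemma no_double_root: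
  fixes x :: "'a::field_char_0"
  assumes "m \<ge> 1" "[:-x, 1:]^2 dvd (monom 1 (2^m) - [:0, 1:])"
  shows False
proof -
  define k :: nat where "k = 2 ^ m"
  have k2: "k \<ge> 2" using assms(1) unfolding k_def
    by (metis One_nat_def power_increasing_iff power_one_right one_less_numeral_iff semiring_norm(76) nat_less_le)
  obtain R where R: "monom 1 k - [:0, 1:] = [:-x, 1:]^2 * R" using assms(2) k_def by (elim dvdE) simp
  have p0: "poly (monom 1 k - [:0, 1:]) x = 0" using R by simp
  have "poly (pderiv (monom 1 k - [:0, 1:])) x = poly (pderiv ([:-x, 1:]^2 * R)) x" using R by simp
  also have "\<dots> = 0" by (simp only: pderiv_mult poly_add poly_mult power2_eq_square) (simp add: pderiv_pCons)
  finally have p1: "poly (pderiv (monom 1 k - [:0, 1:])) x = 0" .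
  have e1: "x ^ k = x" using p0 by (simp add: poly_monom)
  have e2: "of_nat k * x ^ (k - 1) = 1" using p1 by (simp add: pderiv_diff pderiv_monom poly_monom pderiv_pCons)
  have xk: "x ^ k = x * x ^ (k - 1)" using k2 by (metis Suc_diff_1 not_numeral_le_zero not_gr0 power_Suc)
  have "x \<noteq> 0"
  proof
    assume "x = 0"
    hence "x ^ (k - 1) = 0" using k2 by simp
    thus False using e2 by (simp add: power_0_left)
  qed
  hence "x ^ (k - 1) = 1" using e1 xk by simp
  hence "(of_nat k :: 'a) = 1" using e2 by simp
  hence "k = 1" by (metis of_nat_1 of_nat_eq_iff)
  thus False using k2 by simp
qed

lemma Fm_sqfree:
  fixes \<pi> :: "'a::{alg_closed_field, field_char_0} poly fract poly"
  assumes m: "m \<ge> 1" and deg: "degree \<pi> > 0"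
  shows "\<not> \<pi>^2 dvd Fm m"
proof
  assume "\<pi>^2 dvd Fm m"
  then obtain G where G: "Fm m = \<pi>^2 * G" by (elim dvdE)
  have \<pi>0: "\<pi> \<noteq> 0" using deg by auto
  define l where "l = lead_coeff \<pi>"
  have l0: "l \<noteq> 0" using \<pi>0 l_def by simp
  define \<pi>' where "\<pi>' = smult (inverse l) \<pi>"
  define G' where "G' = smult (l^2) G"
  have eq: "Fm m = \<pi>'^2 * G'" using G l0 by (simp add: \<pi>'_def G'_def power2_eq_square field_simps)
  have l\<pi>': "lead_coeff \<pi>' = 1" using l0 by (simp add: \<pi>'_def l_def)
  have d\<pi>': "degree \<pi>' = degree \<pi>" using l0 by (simp add: \<pi>'_def)
  have lF: "lead_coeff (Fm m :: 'a poly fract poly) = 1" using degree_Fm[OF m, where 'a='a] by blast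
  have lG': "lead_coeff G' = 1"
    using lF eq l\<pi>' by (simp add: lead_coeff_mult lead_coeff_power)
  have rF: "regp 0 (Fm m :: 'a poly fract poly)" using regp_Fm by blast
  have r2: "regp 0 (\<pi>'^2)"
    using gauss_dvr[OF rF eq] l\<pi>' lG' by (simp add: lead_coeff_power)
  have r1: "regp 0 \<pi>'"
    using gauss_dvr[OF r2, of \<pi>' \<pi>'] l\<pi>' by (simp add: power2_eq_square)
  have rG: "regp 0 G'"
    using gauss_dvr[OF rF, of G' "\<pi>'^2"] eq l\<pi>' lG' by (simp add: lead_coeff_power mult.commute)
  have de: "degree (evp 0 \<pi>') > 0" using degree_evp_monic[OF r1 l\<pi>'] d\<pi>' deg by simp
  obtain x where x: "poly (evp 0 \<pi>') x = 0" using alg_closed_imp_poly_has_root[OF de] by blast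
  have "[:-x, 1:] dvd evp 0 \<pi>'" using x by (simp add: poly_eq_0_iff_dvd)
  hence "[:-x, 1:]^2 dvd (evp 0 \<pi>')^2" by (rule dvd_power_same)
  hence d2: "[:-x, 1:]^2 dvd (evp 0 \<pi>')^2 * evp 0 G'" by (rule dvd_mult2)
  have "evp 0 (Fm m) = (evp 0 \<pi>')^2 * evp 0 G'"
    using eq regp_mult[OF conjunct1[OF regp_power[OF r1, of 2]] rG] regp_power[OF r1, of 2] by simp
  moreover have "evp 0 (Fm m :: 'a poly fract poly) = monom 1 (2^m) - [:0,1:]"
    using regp_Fm[where 'a='a, of 0 m] by (simp add: citer_0)
  ultimately have "[:-x, 1:]^2 dvd (monom 1 (2^m) - [:0, 1:])" using d2 by simp
  thus False using no_double_root[OF m] by blast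
qed



instantiation fract :: (idom)
  "{unique_euclidean_ring, normalization_euclidean_semiring, normalization_semidom_multiplicative}"
begin
definition [simp]: "normalize_fract = (normalize_field :: 'a fract \<Rightarrow> _)"
definition [simp]: "unit_factor_fract = (unit_factor_field :: 'a fract \<Rightarrow> _)"
definition [simp]: "modulo_fract = (mod_field :: 'a fract \<Rightarrow> _)"
definition [simp]: "euclidean_size_fract = (euclidean_size_field :: 'a fract \<Rightarrow> _)"
definition [simp]: "division_segment (x :: 'a fract) = 1"
instance
  by standard
    (simp_all add: dvd_field_iff field_split_simps split: if_splits)
end

instantiation fract :: (idom) euclidean_ring_gcd
begin
definition gcd_fract :: "'a fract \<Rightarrow> 'a fract \<Rightarrow> 'a fract" where
  "gcd_fract = Euclidean_Algorithm.gcd"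
definition lcm_fract :: "'a fract \<Rightarrow> 'a fract \<Rightarrow> 'a fract" where
  "lcm_fract = Euclidean_Algorithm.lcm"
definition Gcd_fract :: "'a fract set \<Rightarrow> 'a fract" where
 "Gcd_fract = Euclidean_Algorithm.Gcd"
definition Lcm_fract :: "'a fract set \<Rightarrow> 'a fract" where
 "Lcm_fract = Euclidean_Algorithm.Lcm"
instance by standard (simp_all add: gcd_fract_def lcm_fract_def Gcd_fract_def Lcm_fract_def)
end

instance fract :: (idom) field_gcd ..

lemma dvd_pcompose_diff: "(p - q) dvd (pcompose h p - pcompose h (q::'a::comm_ring_1 poly))"
proof (induction h)
  case 0 thus ?case by simp
next
  case (pCons a h)
  have "pcompose (pCons a h) p - pcompose (pCons a h) q = p * (pcompose h p - pcompose h q) + (p - q) * pcompose h q"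
    by (simp add: pcompose_pCons algebra_simps)
  thus ?case using pCons.IH by simp
qed

lemma Fm_dvd_shift: "Fm a dvd (fiter (a + k) - fiter k :: 'a::field poly fract poly)"
proof -
  have "fiter (a + k) - fiter k = pcompose (fiter k) (fiter a) - pcompose (fiter k) ([:0,1:] :: 'a poly fract poly)"
    by (simp add: fiter_add)
  thus ?thesis using dvd_pcompose_diff[of "fiter a" "[:0,1:]" "fiter k"] by (simp add: Fm_def)
qed

lemma Fm_add:
  fixes \<pi> :: "'a::field poly fract poly"
  assumes "\<pi> dvd Fm a" "\<pi> dvd Fm b"
  shows "\<pi> dvd Fm (a + b)"
proof -
  have "(Fm (a + b) :: 'a poly fract poly) = (fiter (a + b) - fiter b) + Fm b" by (simp add: Fm_def)
  thus ?thesis using assms dvd_trans[OF assms(1) Fm_dvd_shift[of a b]] by (metis dvd_add)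
qed

lemma Fm_sub:
  fixes \<pi> :: "'a::field poly fract poly"
  assumes "\<pi> dvd Fm a" "\<pi> dvd Fm (a + k)"
  shows "\<pi> dvd Fm k"
proof -
  have "(Fm k :: 'a poly fract poly) = Fm (a + k) - (fiter (a + k) - fiter k)" by (simp add: Fm_def)
  thus ?thesis using assms dvd_trans[OF assms(1) Fm_dvd_shift[of a k]] by (metis dvd_diff)
qed

lemma nat_set_period:
  fixes S :: "nat set"
  assumes add: "\<And>a b. a \<in> S \<Longrightarrow> b \<in> S \<Longrightarrow> a + b \<in> S"
    and sub: "\<And>a k. a \<in> S \<Longrightarrow> a + k \<in> S \<Longrightarrow> k \<in> S"
    and zero: "0 \<in> S"
    and n0: "n0 > 0" "n0 \<in> S" "\<And>m. 0 < m \<Longrightarrow> m < n0 \<Longrightarrow> m \<notin> S"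
  shows "m \<in> S \<longleftrightarrow> n0 dvd m"
proof
  have mult: "n0 * q \<in> S" for q
    by (induction q) (simp_all add: zero add n0(2))
  assume "m \<in> S"
  have "m = n0 * (m div n0) + m mod n0" by simp
  hence "m mod n0 \<in> S" using sub[OF mult[of "m div n0"]] \<open>m \<in> S\<close> by metis
  moreover have "m mod n0 < n0" using n0(1) by simp
  ultimately have "m mod n0 = 0" using n0(3) by (metis gr0I)
  thus "n0 dvd m" by (simp add: dvd_eq_mod_eq_0)
next
  assume "n0 dvd m"
  then obtain q where "m = n0 * q" by (elim dvdE)
  moreover have "n0 * q \<in> S" by (induction q) (simp_all add: zero add n0(2))
  ultimately show "m \<in> S" by simp
qed



lemma moebius_1: "moebius 1 = 1"
  by (simp add: moebius_def)

lemma moebius_range: "moebius n = 1 \<or> moebius n = -1 \<or> moebius n = 0"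
  by (auto simp: moebius_def minus_one_power_iff)

lemma coprime_mult_dvd_nat:
  fixes a b c :: nat
  assumes "coprime a b" "a dvd c" "b dvd c"
  shows "a * b dvd c"
  using assms by (simp add: divides_mult)

lemma moebius_prime_mult:
  fixes p d :: nat
  assumes p: "prime p" and nd: "\<not> p dvd d" and d: "d > 0"
  shows "moebius (p * d) = - moebius d"
proof -
  have cop: "coprime p d" using p nd by (rule prime_imp_coprime)
  have sq: "squarefree (p * d) \<longleftrightarrow> squarefree d"
    using squarefree_multD(2)[of p d] squarefree_mult_coprime[OF cop squarefree_prime[OF p]] by blast
  have p0: "p \<noteq> 0" using p by auto
  have pf: "prime_factors (p * d) = insert p (prime_factors d)"
    using prime_factors_product[OF p0, of d] d prime_prime_factors[OF p] by auto
  have "p \<notin> prime_factors d" using nd by (auto dest: in_prime_factors_imp_dvd)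
  hence "card (prime_factors (p * d)) = Suc (card (prime_factors d))" using pf by simp
  thus ?thesis using sq by (simp add: moebius_def)
qed

lemma not_squarefree_moebius: "\<not> squarefree n \<Longrightarrow> moebius n = 0"
  by (simp add: moebius_def)

lemma moebius_sum:
  fixes k :: nat
  assumes "k \<ge> 1"
  shows "(\<Sum>d\<in>{d. d dvd k}. moebius d) = (if k = 1 then 1 else 0)"
proof (cases "k = 1")
  case True
  have "{d. d dvd (1::nat)} = {1}" by auto
  thus ?thesis using True by (simp add: moebius_def)
next
  case False
  obtain p where p: "prime p" "p dvd k" using prime_factor_nat[OF False] by blast
  have k0: "k > 0" using assms by simp
  define D where "D = {d. d dvd k}"
  define D0 where "D0 = {d \<in> D. \<not> p dvd d}"
  define D1 where "D1 = {d \<in> D. p dvd d}"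
  have finD: "finite D" unfolding D_def using k0 by simp
  have U: "D = D0 \<union> D1" and Dj: "D0 \<inter> D1 = {}" by (auto simp: D0_def D1_def)
  have fin0: "finite D0" and fin1': "finite D1" using finD by (simp_all add: D0_def D1_def)
  have "sum moebius (D0 \<union> D1) = sum moebius D0 + sum moebius D1"
    by (rule sum.union_disjoint) (use fin0 fin1' Dj in auto)
  hence split: "sum moebius D = sum moebius D0 + sum moebius D1" using U by simp
  define I where "I = (\<lambda>d. p * d) ` D0"
  have ID1: "I \<subseteq> D1"
  proof
    fix x assume "x \<in> I"
    then obtain d where d: "d \<in> D0" "x = p * d" by (auto simp: I_def)
    have "coprime p d" using p(1) d(1) by (intro prime_imp_coprime) (auto simp: D0_def)
    hence "p * d dvd k" using p(2) d(1) by (intro coprime_mult_dvd_nat) (auto simp: D0_def D_def)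
    thus "x \<in> D1" using d by (simp add: D1_def D_def)
  qed
  have fin1: "finite D1" using finD by (simp add: D1_def)
  have zero: "moebius x = 0" if "x \<in> D1 - I" for x
  proof -
    from that have x: "x dvd k" "p dvd x" "x \<notin> I" by (auto simp: D1_def D_def)
    then obtain e where e: "x = p * e" by (elim dvdE)
    have "e dvd k" using x(1) e by (metis dvd_mult_right)
    have "p dvd e"
    proof (rule ccontr)
      assume "\<not> p dvd e"
      hence "e \<in> D0" using \<open>e dvd k\<close> by (simp add: D0_def D_def)
      hence "x \<in> I" using e unfolding I_def by blast
      thus False using x by simp
    qed
    then obtain f where "e = p * f" by (elim dvdE)
    hence "p^2 dvd x" using e by (simp add: power2_eq_square)
    moreover have "\<not> is_unit p" using p(1) by (metis not_prime_unit)
    ultimately have "\<not> squarefree x" by (auto simp: squarefree_def)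
    thus ?thesis by (rule not_squarefree_moebius)
  qed
  have "sum moebius D1 = sum moebius I + sum moebius (D1 - I)"
    using ID1 fin1 by (metis add.commute sum.subset_diff)
  also have "sum moebius (D1 - I) = 0" using zero by simp
  also have "sum moebius I = (\<Sum>d\<in>D0. moebius (p * d))"
    unfolding I_def using p(1) by (subst sum.reindex) (auto simp: inj_on_def prime_gt_0_nat)
  also have "\<dots> = (\<Sum>d\<in>D0. - moebius d)"
  proof (rule sum.cong)
    fix d assume "d \<in> D0"
    hence "\<not> p dvd d" "d > 0" using k0 by (auto simp: D0_def D_def intro: Nat.gr0I)
    thus "moebius (p * d) = - moebius d" using moebius_prime_mult[OF p(1)] by simp
  qed simp
  finally have "sum moebius D1 = - sum moebius D0" by (simp add: sum_negf)
  hence "sum moebius D = 0" using split by simp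
  thus ?thesis using False D_def by simp
qed

lemma sum_indicator_card:
  "finite A \<Longrightarrow> (\<Sum>x\<in>A. (if P x then 1 else 0) :: int) = int (card {x\<in>A. P x})"
  using sum.inter_filter[of A "\<lambda>_. 1::int" P] by simp

lemma count_ineq:
  fixes n n0 :: nat
  assumes n: "n \<ge> 1" and n0: "n0 \<ge> 1"
  shows "card {m. m dvd n \<and> moebius (n div m) = -1 \<and> n0 dvd m} \<le>
         card {m. m dvd n \<and> moebius (n div m) = 1 \<and> n0 dvd m}"
proof -
  define M where "M = {m. m dvd n \<and> n0 dvd m}"
  have finM: "finite M"
  proof (rule finite_subset)
    show "M \<subseteq> {m. m dvd n}" by (auto simp: M_def)
    show "finite {m. m dvd n}" using n by simp
  qed
  have nonneg: "(\<Sum>m\<in>M. moebius (n div m)) \<ge> 0"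
  proof (cases "n0 dvd n")
    case False
    hence "M = {}" unfolding M_def using dvd_trans by blast
    thus ?thesis by simp
  next
    case True
    then obtain k where k: "n = n0 * k" by (elim dvdE)
    have k1: "k \<ge> 1" using k n by (cases k) auto
    have "(\<Sum>m\<in>M. moebius (n div m)) = (\<Sum>d\<in>{d. d dvd k}. moebius d)"
    proof (rule sum.reindex_bij_witness[where i = "\<lambda>d. n div d" and j = "\<lambda>m. n div m"])
      fix m assume mM: "m \<in> M"
      hence "m dvd n" "n0 dvd m" by (simp_all add: M_def)
      then obtain q j where q: "n = m * q" and j: "m = n0 * j" by (meson dvdE)
      have q0: "q > 0" using q n by (cases q) auto
      have m0: "m > 0" using q n by (cases m) auto
      have nm: "n div m = q" using q m0 by simp
      have "n div q = m" using q q0 by simp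
      thus "n div (n div m) = m" using nm by simp
      have "n0 * k = n0 * (j * q)" using k q j by (metis mult.assoc)
      hence "k = j * q" using n0 by simp
      thus "n div m \<in> {d. d dvd k}" using nm by simp
    next
      fix d assume "d \<in> {d. d dvd k}"
      then obtain e where e: "k = d * e" by (auto elim!: dvdE)
      have d0: "d > 0" using e k1 by (cases d) auto
      have e0: "e > 0" using e k1 by (cases e) auto
      have n1: "n = d * (n0 * e)" using k e by (simp add: algebra_simps)
      have nd: "n div d = n0 * e" using n1 d0 by simp
      have n2: "n = (n0 * e) * d" using n1 by (simp add: algebra_simps)
      have "n div (n0 * e) = d" using n2 e0 n0 by simp
      thus "n div (n div d) = d" using nd by simp
      have "n0 * e dvd n" using n2 by simp
      thus "n div d \<in> M" using nd by (simp add: M_def)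
    qed simp
    thus ?thesis using moebius_sum[OF k1] by simp
  qed
  have pt: "moebius (n div m) = (if moebius (n div m) = 1 then 1 else 0) - (if moebius (n div m) = -1 then 1 else 0 :: int)" for m
    using moebius_range[of "n div m"] by (elim disjE) simp_all
  have s1: "(\<Sum>m\<in>M. moebius (n div m)) =
        (\<Sum>m\<in>M. (if moebius (n div m) = 1 then 1 else 0) - (if moebius (n div m) = -1 then 1 else 0))"
    by (rule sum.cong[OF refl pt])
  have s2: "(\<Sum>m\<in>M. (if moebius (n div m) = 1 then 1 else 0) - (if moebius (n div m) = -1 then 1 else 0) :: int)
     = (\<Sum>m\<in>M. (if moebius (n div m) = 1 then 1 else 0)) - (\<Sum>m\<in>M. (if moebius (n div m) = -1 then 1 else 0))"
    by (simp only: sum_subtractf)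
  have s3: "(\<Sum>m\<in>M. (if moebius (n div m) = 1 then 1 else 0) :: int) = int (card {m\<in>M. moebius (n div m) = 1})"
    by (rule sum_indicator_card[OF finM])
  have s4: "(\<Sum>m\<in>M. (if moebius (n div m) = -1 then 1 else 0) :: int) = int (card {m\<in>M. moebius (n div m) = -1})"
    by (rule sum_indicator_card[OF finM])
  have "int (card {m\<in>M. moebius (n div m) = -1}) \<le> int (card {m\<in>M. moebius (n div m) = 1})"
    using nonneg s1 s2 s3 s4 by linarith
  moreover have "{m\<in>M. moebius (n div m) = 1} = {m. m dvd n \<and> moebius (n div m) = 1 \<and> n0 dvd m}"
    "{m\<in>M. moebius (n div m) = -1} = {m. m dvd n \<and> moebius (n div m) = -1 \<and> n0 dvd m}"
    by (auto simp: M_def)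
  ultimately show ?thesis by simp
qed



definition NumP :: "nat \<Rightarrow> 'a::field poly fract poly" where
  "NumP n = (\<Prod>m\<in>{m. m dvd n \<and> moebius (n div m) = 1}. Fm m)"

definition DenP :: "nat \<Rightarrow> 'a::field poly fract poly" where
  "DenP n = (\<Prod>m\<in>{m. m dvd n \<and> moebius (n div m) = -1}. Fm m)"

lemma dynatomic_eq: "dynatomic n = NumP n div DenP n"
  by (simp add: dynatomic_def NumP_def DenP_def Fm_def)

lemma prime_degree_pos:
  fixes \<pi> :: "'a::field poly fract poly"
  assumes "prime \<pi>"
  shows "degree \<pi> > 0"
proof -
  have "\<pi> \<noteq> 0" "\<not> is_unit \<pi>" using assms by auto
  thus ?thesis using is_unit_iff_degree[of \<pi>] by auto
qed

lemma mult_Fm: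
  fixes \<pi> :: "'a::{alg_closed_field, field_char_0} poly fract poly"
  assumes m: "m \<ge> 1" and p: "prime \<pi>"
  shows "multiplicity \<pi> (Fm m) = (if \<pi> dvd Fm m then 1 else 0)"
proof (cases "\<pi> dvd Fm m")
  case False thus ?thesis by (simp add: not_dvd_imp_multiplicity_0)
next
  case True
  have nz: "(Fm m :: 'a poly fract poly) \<noteq> 0" using degree_Fm[OF m, where 'a='a] by blast
  have nu: "\<not> is_unit \<pi>" using p by auto
  have "multiplicity \<pi> (Fm m) > 0" using True multiplicity_gt_zero_iff[OF nz nu] by simp
  moreover have "\<not> 2 \<le> multiplicity \<pi> (Fm m)"
    using power_dvd_iff_le_multiplicity[OF nz nu, of 2] Fm_sqfree[OF m prime_degree_pos[OF p]] by simp
  ultimately show ?thesis using True by simp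
qed

lemma Fm_0: "Fm 0 = 0"
  by (simp add: Fm_def)

lemma period_structure:
  fixes \<pi> :: "'a::field poly fract poly"
  shows "(\<forall>m>0. \<not> \<pi> dvd Fm m) \<or> (\<exists>n0>0. \<forall>m. \<pi> dvd Fm m \<longleftrightarrow> n0 dvd m)"
proof (cases "\<exists>m>0. \<pi> dvd Fm m")
  case False thus ?thesis by blast
next
  case True
  define S where "S = {m. \<pi> dvd Fm m}"
  define n0 where "n0 = (LEAST m. m > 0 \<and> m \<in> S)"
  have ex: "\<exists>m. m > 0 \<and> m \<in> S" using True by (auto simp: S_def)
  have n0: "n0 > 0 \<and> n0 \<in> S" unfolding n0_def using LeastI_ex[OF ex] .
  have small: "m \<notin> S" if "0 < m" "m < n0" for m
    using that not_less_Least[of m "\<lambda>m. m > 0 \<and> m \<in> S"] n0_def by auto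
  have "m \<in> S \<longleftrightarrow> n0 dvd m" for m
  proof (rule nat_set_period)
    show "a + b \<in> S" if "a \<in> S" "b \<in> S" for a b using that Fm_add by (auto simp: S_def)
    show "k \<in> S" if "a \<in> S" "a + k \<in> S" for a k using that Fm_sub by (auto simp: S_def)
    show "0 \<in> S" by (simp add: S_def Fm_0)
  qed (use n0 small in auto)
  thus ?thesis using n0 by (auto simp: S_def)
qed

lemma sum_indicator_card_nat:
  "finite A \<Longrightarrow> (\<Sum>x\<in>A. (if P x then 1 else 0) :: nat) = card {x\<in>A. P x}"
  using sum.inter_filter[of A "\<lambda>_. 1::nat" P] by simp

lemma multiplicity_prod_Fm:
  fixes \<pi> :: "'a::{alg_closed_field, field_char_0} poly fract poly"
  assumes p: "prime \<pi>" and n: "n \<ge> 1" and T: "T \<subseteq> {m. m dvd n}"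
  shows "multiplicity \<pi> (\<Prod>m\<in>T. Fm m) = card {m\<in>T. \<pi> dvd Fm m}"
proof -
  have finT: "finite T" by (rule finite_subset[OF T]) (use n in simp)
  have pos: "m \<ge> 1" if "m \<in> T" for m
  proof -
    have "m dvd n" using that T by auto
    thus ?thesis using n by (cases m) auto
  qed
  have nz: "(Fm m :: 'a poly fract poly) \<noteq> 0" if "m \<in> T" for m
    using degree_Fm[OF pos[OF that], where 'a='a] by blast
  have "0 \<notin> (Fm :: nat \<Rightarrow> 'a poly fract poly) ` T" using nz by (metis imageE)
  hence "multiplicity \<pi> (\<Prod>m\<in>T. Fm m) = (\<Sum>m\<in>T. multiplicity \<pi> (Fm m))"
    using p finT by (intro prime_elem_multiplicity_prod_distrib) auto
  also have "\<dots> = (\<Sum>m\<in>T. (if \<pi> dvd Fm m then 1 else 0))"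
    using pos mult_Fm[OF _ p] by (intro sum.cong) auto
  also have "\<dots> = card {m\<in>T. \<pi> dvd Fm m}" by (rule sum_indicator_card_nat[OF finT])
  finally show ?thesis .
qed

lemma DenP_dvd_NumP:
  assumes n: "n \<ge> 1"
  shows "(DenP n :: 'a::{alg_closed_field, field_char_0} poly fract poly) dvd NumP n"
proof (rule multiplicity_le_imp_dvd)
  define A where "A = {m. m dvd n \<and> moebius (n div m) = 1}"
  define B where "B = {m. m dvd n \<and> moebius (n div m) = -1}"
  have finB: "finite B" by (rule finite_subset[of _ "{m. m dvd n}"]) (use n in \<open>auto simp: B_def\<close>)
  have posB: "m \<ge> 1" if "m \<in> B" for m
  proof -
    have "m dvd n" using that by (auto simp: B_def)
    thus ?thesis using n by (cases m) auto
  qed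
  have nzB: "(Fm m :: 'a poly fract poly) \<noteq> 0" if "m \<in> B" for m
    using degree_Fm[OF posB[OF that], where 'a='a] by blast
  show "(DenP n :: 'a poly fract poly) \<noteq> 0"
    unfolding DenP_def B_def[symmetric] using finB nzB by (simp add: prod_zero_iff)
  fix \<pi> :: "'a poly fract poly" assume p: "prime \<pi>"
  have As: "A \<subseteq> {m. m dvd n}" by (auto simp: A_def)
  have Bs: "B \<subseteq> {m. m dvd n}" by (auto simp: B_def)
  have NA: "(NumP n :: 'a poly fract poly) = (\<Prod>m\<in>A. Fm m)" by (simp add: NumP_def A_def)
  have DB: "(DenP n :: 'a poly fract poly) = (\<Prod>m\<in>B. Fm m)" by (simp add: DenP_def B_def)
  have mA: "multiplicity \<pi> (NumP n) = card {m\<in>A. \<pi> dvd Fm m}"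
    unfolding NA by (rule multiplicity_prod_Fm[OF p n As])
  have mB: "multiplicity \<pi> (DenP n) = card {m\<in>B. \<pi> dvd Fm m}"
    unfolding DB by (rule multiplicity_prod_Fm[OF p n Bs])
  from period_structure[of \<pi>]
  show "multiplicity \<pi> (DenP n) \<le> multiplicity \<pi> (NumP n)"
  proof
    assume "\<forall>m>0. \<not> \<pi> dvd Fm m"
    hence e: "{m\<in>B. \<pi> dvd Fm m} = {}" using posB by (auto simp: Suc_le_eq)
    show ?thesis unfolding mB e by simp
  next
    assume "\<exists>n0>0. \<forall>m. \<pi> dvd Fm m \<longleftrightarrow> n0 dvd m"
    then obtain n0 where n0: "n0 > 0" "\<And>m. \<pi> dvd Fm m \<longleftrightarrow> n0 dvd m" by blast
    have "{m\<in>A. \<pi> dvd Fm m} = {m. m dvd n \<and> moebius (n div m) = 1 \<and> n0 dvd m}"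
      using n0 by (auto simp: A_def)
    moreover have "{m\<in>B. \<pi> dvd Fm m} = {m. m dvd n \<and> moebius (n div m) = -1 \<and> n0 dvd m}"
      using n0 by (auto simp: B_def)
    ultimately show ?thesis using mA mB count_ineq[OF n, of n0] n0 by simp
  qed
qed

lemma NumP_eq:
  assumes n: "n \<ge> 1"
  shows "(NumP n :: 'a::{alg_closed_field, field_char_0} poly fract poly) = dynatomic n * DenP n"
  using DenP_dvd_NumP[OF n, where 'a='a] by (simp add: dynatomic_eq)



section \<open>Dynamics in K\<close>

lemma funpow_period_closed:
  fixes \<phi> :: "'b \<Rightarrow> 'b" and y :: 'b
  defines "S \<equiv> {m. (\<phi> ^^ m) y = y}"
  shows "\<And>a b. a \<in> S \<Longrightarrow> b \<in> S \<Longrightarrow> a + b \<in> S"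
    and "\<And>a k. a \<in> S \<Longrightarrow> a + k \<in> S \<Longrightarrow> k \<in> S"
    and "0 \<in> S"
proof -
  fix a b assume "a \<in> S" "b \<in> S"
  thus "a + b \<in> S" by (simp add: S_def funpow_add)
next
  fix a k assume "a \<in> S" "a + k \<in> S"
  hence "(\<phi> ^^ (k + a)) y = y" "(\<phi> ^^ a) y = y" by (simp_all add: S_def add.commute)
  thus "k \<in> S" by (simp add: S_def funpow_add)
next
  show "0 \<in> S" by (simp add: S_def)
qed

lemma exact_period_dvd:
  assumes "exact_period \<phi> y N"
  shows "(\<phi> ^^ m) y = y \<longleftrightarrow> N dvd m"
proof -
  define S where "S = {m. (\<phi> ^^ m) y = y}"
  have "m \<in> S \<longleftrightarrow> N dvd m"
    by (rule nat_set_period[OF funpow_period_closed(1,2,3)[where \<phi>=\<phi> and y=y, folded S_def]])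
       (use assms in \<open>auto simp: exact_period_def S_def\<close>)
  thus ?thesis by (simp add: S_def)
qed

lemma least_period:
  assumes "(\<phi> ^^ m0) y = y" "m0 > 0"
  obtains n where "n > 0" "exact_period \<phi> y n" "\<And>m. (\<phi> ^^ m) y = y \<longleftrightarrow> n dvd m"
proof -
  define n where "n = (LEAST m. m > 0 \<and> (\<phi> ^^ m) y = y)"
  have ex: "\<exists>m. m > 0 \<and> (\<phi> ^^ m) y = y" using assms by blast
  have n: "n > 0 \<and> (\<phi> ^^ n) y = y" unfolding n_def using LeastI_ex[OF ex] .
  have small: "(\<phi> ^^ m) y \<noteq> y" if "0 < m" "m < n" for m
    using that not_less_Least[of m "\<lambda>m. m > 0 \<and> (\<phi> ^^ m) y = y"] n_def by auto
  have ep: "exact_period \<phi> y n" using n small by (auto simp: exact_period_def)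
  show ?thesis using that[OF conjunct1[OF n] ep exact_period_dvd[OF ep]] .
qed

lemma funpow_pos: "n > 0 \<Longrightarrow> (f ^^ n) x = (f ^^ (n - 1)) (f x)"
  by (cases n) (simp_all add: funpow_swap1)

lemma funpow_comm: "(f ^^ k) (f z) = f ((f ^^ k) z)"
  by (simp add: funpow_swap1)

lemma funpow_add_apply: "(f ^^ (a + b)) z = (f ^^ a) ((f ^^ b) z)"
  by (simp add: funpow_add)

lemma portrait_iff:
  fixes c x :: "'a::field_char_0"
  defines "\<phi> \<equiv> (\<lambda>z. z^2 + c)"
  shows "has_portrait \<phi> x 1 N \<longleftrightarrow> exact_period \<phi> (- x) N \<and> x \<noteq> 0"
proof
  assume H: "has_portrait \<phi> x 1 N"
  hence np: "\<not> is_periodic \<phi> x" and ep: "exact_period \<phi> (\<phi> x) N"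
    by (auto simp: has_portrait_def)
  have N0: "N > 0" using ep by (simp add: exact_period_def)
  define w where "w = \<phi> x"
  define y where "y = (\<phi> ^^ (N - 1)) w"
  have wN: "(\<phi> ^^ N) w = w" using ep by (simp add: exact_period_def w_def)
  have Nsuc: "N = Suc (N - 1)" using N0 by simp
  have fy: "\<phi> y = w" unfolding y_def using wN funpow_pos[OF N0, of \<phi> w] funpow_comm[of "N - 1" \<phi> w] N0
    by (cases N) (simp_all add: funpow_swap1)
  have yN: "(\<phi> ^^ N) y = y"
  proof -
    have "(\<phi> ^^ N) y = (\<phi> ^^ (N - 1)) ((\<phi> ^^ N) w)"
      unfolding y_def by (simp only: funpow_add_apply[symmetric] add.commute)
    thus ?thesis using wN y_def by simp
  qed
  hence yper: "is_periodic \<phi> y" using N0 by (auto simp: is_periodic_def)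
  have "y^2 = x^2" using fy by (simp add: \<phi>_def w_def)
  hence "y = x \<or> y = - x" by (simp add: power2_eq_iff)
  moreover have "y \<noteq> x" using yper np by auto
  ultimately have yx: "y = - x" by simp
  have "x \<noteq> 0" using yx \<open>y \<noteq> x\<close> by auto
  moreover have "exact_period \<phi> y N"
    unfolding exact_period_def
  proof (intro conjI allI impI)
    show "N > 0" by fact
    show "(\<phi> ^^ N) y = y" by fact
    fix k assume k: "0 < k \<and> k < N"
    show "(\<phi> ^^ k) y \<noteq> y"
    proof
      assume "(\<phi> ^^ k) y = y"
      hence "\<phi> ((\<phi> ^^ k) y) = \<phi> y" by simp
      hence "(\<phi> ^^ k) w = w" using fy funpow_comm[of k \<phi> y] by simp
      thus False using ep k by (auto simp: exact_period_def w_def)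
    qed
  qed
  ultimately show "exact_period \<phi> (- x) N \<and> x \<noteq> 0" using yx by simp
next
  assume H: "exact_period \<phi> (- x) N \<and> x \<noteq> 0"
  define y where "y = - x"
  have ep: "exact_period \<phi> y N" and x0: "x \<noteq> 0" using H by (simp_all add: y_def)
  have N0: "N > 0" using ep by (simp add: exact_period_def)
  have yN: "(\<phi> ^^ N) y = y" using ep by (simp add: exact_period_def)
  have fxy: "\<phi> x = \<phi> y" by (simp add: \<phi>_def y_def)
  have comm: "(\<phi> ^^ k) (\<phi> z) = \<phi> ((\<phi> ^^ k) z)" for k z
    by (rule funpow_comm)
  have per1: "is_periodic \<phi> ((\<phi> ^^ 1) x)"
    using yN N0 fxy comm[of N y] by (auto simp: is_periodic_def)
  have "\<not> is_periodic \<phi> x"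
  proof
    assume "is_periodic \<phi> x"
    then obtain n where n: "n > 0" "(\<phi> ^^ n) x = x" by (auto simp: is_periodic_def)
    have "(\<phi> ^^ n) x = (\<phi> ^^ n) y"
    proof -
      have "(\<phi> ^^ n) x = (\<phi> ^^ (n - 1)) (\<phi> x)" using n(1) by (rule funpow_pos)
      also have "\<dots> = (\<phi> ^^ (n - 1)) (\<phi> y)" using fxy by simp
      also have "\<dots> = (\<phi> ^^ n) y" by (rule funpow_pos[OF n(1), symmetric])
      finally show ?thesis .
    qed
    hence xe: "x = (\<phi> ^^ n) y" using n by simp
    have "y = (\<phi> ^^ N) x"
    proof -
      have "(\<phi> ^^ N) x = (\<phi> ^^ (N - 1)) (\<phi> x)" using N0 by (rule funpow_pos)
      also have "\<dots> = (\<phi> ^^ (N - 1)) (\<phi> y)" using fxy by simp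
      also have "\<dots> = (\<phi> ^^ N) y" by (rule funpow_pos[OF N0, symmetric])
      finally show ?thesis using yN by simp
    qed
    also have "\<dots> = (\<phi> ^^ N) ((\<phi> ^^ n) y)" using xe by simp
    also have "\<dots> = (\<phi> ^^ n) ((\<phi> ^^ N) y)" by (simp only: funpow_add_apply[symmetric] add.commute)
    also have "\<dots> = x" using yN xe by simp
    finally have "y = x" .
    hence "- x = x" using y_def by metis
    hence "x + x = 0" by (metis add.left_inverse)
    hence "2 * x = 0" by (simp only: mult_2)
    thus False using x0 by simp
  qed
  hence "\<forall>k<1. \<not> is_periodic \<phi> ((\<phi> ^^ k) x)" by simp
  moreover have "exact_period \<phi> ((\<phi> ^^ 1) x) N"
    unfolding exact_period_def
  proof (intro conjI allI impI)
    show "N > 0" by fact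
    show "(\<phi> ^^ N) ((\<phi> ^^ 1) x) = (\<phi> ^^ 1) x" using yN fxy comm[of N y] by simp
    fix k assume k: "0 < k \<and> k < N"
    show "(\<phi> ^^ k) ((\<phi> ^^ 1) x) \<noteq> (\<phi> ^^ 1) x"
    proof
      assume "(\<phi> ^^ k) ((\<phi> ^^ 1) x) = (\<phi> ^^ 1) x"
      hence e: "(\<phi> ^^ k) (\<phi> y) = \<phi> y" using fxy by simp
      have "(\<phi> ^^ k) y = (\<phi> ^^ (N - 1)) ((\<phi> ^^ k) (\<phi> y))"
      proof -
        have "(\<phi> ^^ (N - 1)) ((\<phi> ^^ k) (\<phi> y)) = (\<phi> ^^ (N - 1 + k + 1)) y"
          by (simp add: funpow_add comm)
        also have "N - 1 + k + 1 = k + N" using N0 by simp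
        also have "(\<phi> ^^ (k + N)) y = (\<phi> ^^ k) y" using yN by (simp add: funpow_add)
        finally show ?thesis by simp
      qed
      also have "\<dots> = (\<phi> ^^ (N - 1)) (\<phi> y)" using e by simp
      also have "\<dots> = (\<phi> ^^ N) y" by (rule funpow_pos[OF N0, symmetric])
      also have "\<dots> = y" by fact
      finally show False using ep k by (auto simp: exact_period_def)
    qed
  qed
  ultimately show "has_portrait \<phi> x 1 N" using per1 by (simp add: has_portrait_def)
qed



definition Aset :: "nat \<Rightarrow> nat set" where "Aset n = {m. m dvd n \<and> moebius (n div m) = 1}"
definition Bset :: "nat \<Rightarrow> nat set" where "Bset n = {m. m dvd n \<and> moebius (n div m) = -1}"

lemma Aset_fin: "n \<ge> 1 \<Longrightarrow> finite (Aset n)"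
  by (rule finite_subset[of _ "{m. m dvd n}"]) (auto simp: Aset_def)

lemma Bset_fin: "n \<ge> 1 \<Longrightarrow> finite (Bset n)"
  by (rule finite_subset[of _ "{m. m dvd n}"]) (auto simp: Bset_def)

lemma n_in_Aset: "n \<ge> 1 \<Longrightarrow> n \<in> Aset n"
  by (simp add: Aset_def moebius_def)

lemma Bset_lt: "n \<ge> 1 \<Longrightarrow> m \<in> Bset n \<Longrightarrow> m dvd n \<and> m < n \<and> m \<ge> 1"
proof -
  assume n: "n \<ge> 1" and m: "m \<in> Bset n"
  have d: "m dvd n" "moebius (n div m) = -1" using m by (simp_all add: Bset_def)
  have "m \<noteq> n" using d(2) n by (auto simp: moebius_def)
  moreover have "m \<le> n" using d(1) n by (simp add: dvd_imp_le)
  moreover have "m \<ge> 1" using d(1) n by (cases m) auto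
  ultimately show ?thesis using d by simp
qed

lemma Aset_dvd: "m \<in> Aset n \<Longrightarrow> m dvd n"
  by (simp add: Aset_def)

lemma phi_val:
  fixes z :: "'a::{alg_closed_field, field_char_0} poly fract"
  assumes n: "n \<ge> 1" and nz: "\<And>m. m dvd n \<Longrightarrow> poly (Fm m) z \<noteq> 0"
  shows "poly (dynatomic n) z \<noteq> 0 \<and>
    place_val P (poly (dynatomic n) z) =
      (\<Sum>m\<in>Aset n. place_val P (poly (Fm m) z)) - (\<Sum>m\<in>Bset n. place_val P (poly (Fm m) z))"
proof -
  have eq: "poly (NumP n) z = poly (dynatomic n) z * poly (DenP n) z"
    using NumP_eq[OF n, where 'a='a] by simp
  have pA: "poly (NumP n) z = (\<Prod>m\<in>Aset n. poly (Fm m) z)" by (simp add: NumP_def Aset_def poly_prod)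
  have pB: "poly (DenP n) z = (\<Prod>m\<in>Bset n. poly (Fm m) z)" by (simp add: DenP_def Bset_def poly_prod)
  have A: "(\<Prod>m\<in>Aset n. poly (Fm m) z) \<noteq> 0 \<and>
      place_val P (\<Prod>m\<in>Aset n. poly (Fm m) z) = (\<Sum>m\<in>Aset n. place_val P (poly (Fm m) z))"
    using pv_prod[OF Aset_fin[OF n], of "\<lambda>m. poly (Fm m) z" P] nz by (auto simp: Aset_def)
  have B: "(\<Prod>m\<in>Bset n. poly (Fm m) z) \<noteq> 0 \<and>
      place_val P (\<Prod>m\<in>Bset n. poly (Fm m) z) = (\<Sum>m\<in>Bset n. place_val P (poly (Fm m) z))"
    using pv_prod[OF Bset_fin[OF n], of "\<lambda>m. poly (Fm m) z" P] nz by (auto simp: Bset_def)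
  have d0: "poly (dynatomic n) z \<noteq> 0" using eq pA A by auto
  have "place_val P (poly (NumP n) z) = place_val P (poly (dynatomic n) z) + place_val P (poly (DenP n) z)"
    using eq pv_mult[OF d0, of "poly (DenP n) z" P] pB B by simp
  thus ?thesis using d0 pA pB A B by simp
qed

lemma sum_single:
  fixes e :: "nat \<Rightarrow> int"
  assumes n: "n \<ge> 1" and z: "\<And>m. m dvd n \<Longrightarrow> m \<noteq> n \<Longrightarrow> e m = 0"
  shows "(\<Sum>m\<in>Aset n. e m) - (\<Sum>m\<in>Bset n. e m) = e n"
proof -
  have "(\<Sum>m\<in>Aset n. e m) = e n + (\<Sum>m\<in>Aset n - {n}. e m)"
    using n_in_Aset[OF n] Aset_fin[OF n] by (simp add: sum.remove)
  also have "(\<Sum>m\<in>Aset n - {n}. e m) = 0" using z by (intro sum.neutral) (auto simp: Aset_def)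
  moreover have "(\<Sum>m\<in>Bset n. e m) = 0" using z Bset_lt[OF n] by (intro sum.neutral) auto
  ultimately show ?thesis by simp
qed

lemma sum_zero:
  fixes e :: "nat \<Rightarrow> int"
  assumes z: "\<And>m. m dvd n \<Longrightarrow> e m = 0"
  shows "(\<Sum>m\<in>Aset n. e m) - (\<Sum>m\<in>Bset n. e m) = 0"
proof -
  have "(\<Sum>m\<in>Aset n. e m) = 0" using z by (intro sum.neutral) (auto simp: Aset_def)
  moreover have "(\<Sum>m\<in>Bset n. e m) = 0" using z by (intro sum.neutral) (auto simp: Bset_def)
  ultimately show ?thesis by simp
qed

lemma geom_sum: "(\<Sum>m\<in>{1..h}. (2::int) ^ m) = 2 ^ (h + 1) - 2"
  by (induction h) (simp_all add: sum.cl_ivl_Suc)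

lemma pow_ineq:
  assumes N: "N \<ge> 1"
  shows "(\<Sum>m\<in>Bset N. (2::int) ^ m) < (\<Sum>m\<in>Aset N. 2 ^ m)"
proof -
  define h where "h = N div 2"
  have sub: "Bset N \<subseteq> {1..h}"
  proof
    fix m assume "m \<in> Bset N"
    hence m: "m dvd N" "m < N" "m \<ge> 1" using Bset_lt[OF N] by auto
    then obtain q where q: "N = m * q" by (elim dvdE)
    have "q \<noteq> 0" using q N by auto
    moreover have "q \<noteq> 1" using q m by auto
    ultimately have "q \<ge> 2" by simp
    hence "m * 2 \<le> N" using q by (metis mult_le_mono2)
    hence "m \<le> h" unfolding h_def by linarith
    thus "m \<in> {1..h}" using m by simp
  qed
  have "(\<Sum>m\<in>Bset N. (2::int) ^ m) \<le> (\<Sum>m\<in>{1..h}. 2 ^ m)"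
    by (rule sum_mono2) (use sub in auto)
  also have "\<dots> = 2 ^ (h + 1) - 2" by (rule geom_sum)
  also have "\<dots> < 2 ^ (h + 1)" by simp
  also have "(2::int) ^ (h + 1) \<le> 2 ^ N" using N by (intro power_increasing) (auto simp: h_def)
  also have "(2::int) ^ N \<le> (\<Sum>m\<in>Aset N. 2 ^ m)"
    by (rule member_le_sum) (use n_in_Aset[OF N] Aset_fin[OF N] in auto)
  finally show ?thesis .
qed

lemma neg_val:
  fixes g :: "nat \<Rightarrow> int"
  assumes N: "N \<ge> 1" and w: "w < 0" and h: "\<And>m. m dvd N \<Longrightarrow> 2 * g m = 2 ^ m * w"
  shows "(\<Sum>m\<in>Aset N. g m) - (\<Sum>m\<in>Bset N. g m) < 0"
proof -
  have "2 * ((\<Sum>m\<in>Aset N. g m) - (\<Sum>m\<in>Bset N. g m)) = (\<Sum>m\<in>Aset N. 2 * g m) - (\<Sum>m\<in>Bset N. 2 * g m)"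
    by (simp add: sum_distrib_left algebra_simps)
  also have "(\<Sum>m\<in>Aset N. 2 * g m) = (\<Sum>m\<in>Aset N. 2 ^ m * w)"
    using h by (intro sum.cong) (auto simp: Aset_def)
  also have "(\<Sum>m\<in>Bset N. 2 * g m) = (\<Sum>m\<in>Bset N. 2 ^ m * w)"
    using h by (intro sum.cong) (auto simp: Bset_def)
  also have "(\<Sum>m\<in>Aset N. 2 ^ m * w) - (\<Sum>m\<in>Bset N. 2 ^ m * w) =
      ((\<Sum>m\<in>Aset N. 2 ^ m) - (\<Sum>m\<in>Bset N. 2 ^ m)) * w"
    by (simp only: sum_distrib_right[symmetric] left_diff_distrib)
  finally have e: "2 * ((\<Sum>m\<in>Aset N. g m) - (\<Sum>m\<in>Bset N. g m)) =
      ((\<Sum>m\<in>Aset N. 2 ^ m) - (\<Sum>m\<in>Bset N. 2 ^ m)) * w" .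
  have "((\<Sum>m\<in>Aset N. (2::int) ^ m) - (\<Sum>m\<in>Bset N. 2 ^ m)) > 0" using pow_ineq[OF N] by simp
  hence "((\<Sum>m\<in>Aset N. (2::int) ^ m) - (\<Sum>m\<in>Bset N. 2 ^ m)) * w < 0" using w by (simp add: mult_pos_neg)
  hence "2 * ((\<Sum>m\<in>Aset N. g m) - (\<Sum>m\<in>Bset N. g m)) < 0" by (subst e)
  thus ?thesis by simp
qed



lemma poly_Fm: "poly (Fm m) z = poly (fiter m) z - z"
  by (simp add: Fm_def)

lemma iter_pole:
  fixes z :: "'a::field poly fract"
  assumes w0: "poly (fiter m0) z \<noteq> 0" "place_val P (poly (fiter m0) z) < 0"
    "2 * place_val P (poly (fiter m0) z) < place_val P (tvar :: 'a poly fract)"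
  shows "poly (fiter (m0 + j)) z \<noteq> 0 \<and>
         place_val P (poly (fiter (m0 + j)) z) = 2 ^ j * place_val P (poly (fiter m0) z)"
proof (induction j)
  case 0 thus ?case using w0 by simp
next
  case (Suc j)
  define v where "v = place_val P (poly (fiter m0) z)"
  define w where "w = poly (fiter (m0 + j)) z"
  have w: "w \<noteq> 0" "place_val P w = 2 ^ j * v" using Suc by (simp_all add: w_def v_def)
  have w2: "place_val P (w ^ 2) = 2 ^ Suc j * v" using pv_power[OF w(1), of P 2] w by simp
  have "(2::int) ^ Suc j * v \<le> 2 * v"
  proof -
    have "(2::int) ^ 1 \<le> 2 ^ Suc j" by (rule power_increasing) simp_all
    hence "(2::int) \<le> 2 ^ Suc j" by simp
    thus ?thesis using w0(2) v_def by (simp add: mult_right_mono_neg)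
  qed
  hence lt: "place_val P (w ^ 2) < place_val P (tvar :: 'a poly fract)" using w2 w0(3) v_def by simp
  have "w ^ 2 + tvar \<noteq> 0 \<and> place_val P (w ^ 2 + tvar) = place_val P (w ^ 2)"
    using pv_add_lt[OF _ tvar_ne lt] w(1) by simp
  moreover have "poly (fiter (m0 + Suc j)) z = w ^ 2 + tvar" by (simp add: w_def)
  ultimately show ?case using w2 v_def by simp
qed

lemma pole_val:
  fixes \<alpha> :: "'a::field poly fract"
  assumes a0: "\<alpha> \<noteq> 0" and neg: "place_val P \<alpha> < 0" and t: "2 * place_val P \<alpha> < place_val P (tvar :: 'a poly fract)"
    and m: "m \<ge> 1"
  shows "poly (Fm m) (-\<alpha>) \<noteq> 0 \<and> place_val P (poly (Fm m) (-\<alpha>)) = 2 ^ m * place_val P \<alpha>"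
proof -
  have z0: "poly (fiter 0) (-\<alpha>) \<noteq> 0" using a0 by simp
  have zv: "place_val P (poly (fiter 0) (-\<alpha>)) = place_val P \<alpha>" by (simp add: pv_uminus)
  have it: "poly (fiter m) (-\<alpha>) \<noteq> 0 \<and> place_val P (poly (fiter m) (-\<alpha>)) = 2 ^ m * place_val P \<alpha>"
    using iter_pole[OF z0, of P m] zv neg t by simp
  have "(2::int) ^ m * place_val P \<alpha> < place_val P \<alpha>"
  proof -
    have "(2::int) \<le> 2 ^ m" using m by (metis power_one_right power_increasing one_le_numeral)
    hence "(2::int) ^ m * place_val P \<alpha> \<le> 2 * place_val P \<alpha>" using neg by (simp add: mult_right_mono_neg)
    thus ?thesis using neg by linarith
  qed
  hence lt: "place_val P (poly (fiter m) (-\<alpha>)) < place_val P \<alpha>" using it by simp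
  have "poly (Fm m) (-\<alpha>) = poly (fiter m) (-\<alpha>) + \<alpha>" by (simp add: poly_Fm)
  thus ?thesis using pv_add_lt[OF conjunct1[OF it] a0 lt] it by simp
qed

lemma inf_reg_val:
  fixes \<alpha> :: "'a::field poly fract"
  assumes a: "\<alpha> = 0 \<or> place_val Inf \<alpha> \<ge> 0" and m: "m \<ge> 1"
  shows "poly (Fm m) (-\<alpha>) \<noteq> 0 \<and> 2 * place_val Inf (poly (Fm m) (-\<alpha>)) = - (2 ^ m)"
proof -
  have w1: "poly (fiter 1) (-\<alpha>) \<noteq> 0 \<and> place_val Inf (poly (fiter 1) (-\<alpha>)) = -1"
  proof (cases "\<alpha> = 0")
    case True thus ?thesis using tvar_ne[where 'a='a] pv_tvar_Inf[where 'a='a] by simp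
  next
    case False
    hence "place_val Inf \<alpha> \<ge> 0" using a by simp
    hence "place_val Inf ((-\<alpha>)^2) \<ge> 0" using pv_power[of "-\<alpha>" Inf 2] False by (simp add: pv_uminus)
    hence lt: "place_val Inf (tvar :: 'a poly fract) < place_val Inf ((-\<alpha>)^2)" using pv_tvar_Inf[where 'a='a] by simp
    have "tvar + (-\<alpha>)^2 \<noteq> 0 \<and> place_val Inf (tvar + (-\<alpha>)^2) = place_val Inf (tvar :: 'a poly fract)"
      using pv_add_lt[OF tvar_ne _ lt] False by simp
    thus ?thesis using pv_tvar_Inf[where 'a='a] by (simp add: add.commute)
  qed
  have it: "poly (fiter (1 + (m - 1))) (-\<alpha>) \<noteq> 0 \<and>
      place_val Inf (poly (fiter (1 + (m - 1))) (-\<alpha>)) = 2 ^ (m - 1) * (-1)"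
    using iter_pole[of 1 "-\<alpha>" Inf "m - 1"] w1 pv_tvar_Inf[where 'a='a] by simp
  have m1: "1 + (m - 1) = m" using m by simp
  have pm: "2 * place_val Inf (poly (fiter m) (-\<alpha>)) = - (2 ^ m)"
    using it m1 m by (cases m) simp_all
  have nz: "poly (fiter m) (-\<alpha>) \<noteq> 0" using it m1 by simp
  have eq: "poly (Fm m) (-\<alpha>) = poly (fiter m) (-\<alpha>) + \<alpha>" by (simp add: poly_Fm)
  show ?thesis
  proof (cases "\<alpha> = 0")
    case True thus ?thesis using eq pm nz by simp
  next
    case False
    have "place_val Inf (poly (fiter m) (-\<alpha>)) < 0" using pm by (smt (verit) zero_less_power)
    hence lt: "place_val Inf (poly (fiter m) (-\<alpha>)) < place_val Inf \<alpha>" using a False by simp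
    show ?thesis using pv_add_lt[OF nz False lt] eq pm by simp
  qed
qed

lemma Fm_nonzero:
  fixes \<alpha> :: "'a::field poly fract"
  assumes m: "m \<ge> 1"
  shows "poly (Fm m) (-\<alpha>) \<noteq> 0"
proof (cases "\<alpha> = 0 \<or> place_val Inf \<alpha> \<ge> 0")
  case True thus ?thesis using inf_reg_val[OF True m] by simp
next
  case False
  hence "\<alpha> \<noteq> 0" "place_val Inf \<alpha> < 0" by auto
  moreover have "2 * place_val Inf \<alpha> < place_val Inf (tvar :: 'a poly fract)" using calculation pv_tvar_Inf[where 'a='a] by simp
  ultimately show ?thesis using pole_val[of \<alpha> Inf m] m by simp
qed

lemma Fm_nonzero_dvd:
  fixes \<alpha> :: "'a::field poly fract"
  assumes "n \<ge> 1" "m dvd n"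
  shows "poly (Fm m) (-\<alpha>) \<noteq> 0"
proof -
  have "m \<ge> 1" using assms by (cases m) auto
  thus ?thesis by (rule Fm_nonzero)
qed

lemma Inf_neg:
  fixes \<alpha> :: "'a::{alg_closed_field, field_char_0} poly fract"
  assumes N: "N \<ge> 1"
  shows "place_val Inf (poly (dynatomic N) (-\<alpha>)) < 0"
proof -
  have pv: "place_val Inf (poly (dynatomic N) (-\<alpha>)) =
      (\<Sum>m\<in>Aset N. place_val Inf (poly (Fm m) (-\<alpha>))) - (\<Sum>m\<in>Bset N. place_val Inf (poly (Fm m) (-\<alpha>)))"
    using phi_val[OF N, of "-\<alpha>" Inf] Fm_nonzero_dvd[OF N] by blast
  show ?thesis
  proof (cases "\<alpha> = 0 \<or> place_val Inf \<alpha> \<ge> 0")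
    case True
    have "\<And>m. m dvd N \<Longrightarrow> 2 * place_val Inf (poly (Fm m) (-\<alpha>)) = 2 ^ m * (-1)"
    proof -
      fix m assume "m dvd N"
      hence "m \<ge> 1" using N by (cases m) auto
      thus "2 * place_val Inf (poly (Fm m) (-\<alpha>)) = 2 ^ m * (-1)" using inf_reg_val[OF True] by simp
    qed
    from neg_val[OF N _ this] pv show ?thesis by simp
  next
    case False
    hence a: "\<alpha> \<noteq> 0" "place_val Inf \<alpha> < 0" by auto
    have t: "2 * place_val Inf \<alpha> < place_val Inf (tvar :: 'a poly fract)" using a pv_tvar_Inf[where 'a='a] by simp
    have "\<And>m. m dvd N \<Longrightarrow> 2 * place_val Inf (poly (Fm m) (-\<alpha>)) = 2 ^ m * (2 * place_val Inf \<alpha>)"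
    proof -
      fix m assume "m dvd N"
      hence "m \<ge> 1" using N by (cases m) auto
      thus "2 * place_val Inf (poly (Fm m) (-\<alpha>)) = 2 ^ m * (2 * place_val Inf \<alpha>)"
        using pole_val[OF a t] by simp
    qed
    from neg_val[OF N _ this] pv a show ?thesis by simp
  qed
qed

lemma Fin_pole_neg:
  fixes \<alpha> :: "'a::{alg_closed_field, field_char_0} poly fract"
  assumes N: "N \<ge> 1" and a: "\<alpha> \<noteq> 0" "place_val (Fin c) \<alpha> < 0"
  shows "place_val (Fin c) (poly (dynatomic N) (-\<alpha>)) < 0"
proof -
  have pv: "place_val (Fin c) (poly (dynatomic N) (-\<alpha>)) =
      (\<Sum>m\<in>Aset N. place_val (Fin c) (poly (Fm m) (-\<alpha>))) - (\<Sum>m\<in>Bset N. place_val (Fin c) (poly (Fm m) (-\<alpha>)))"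
    using phi_val[OF N, of "-\<alpha>" "Fin c"] Fm_nonzero_dvd[OF N] by blast
  have t: "2 * place_val (Fin c) \<alpha> < place_val (Fin c) (tvar :: 'a poly fract)" using a pv_tvar_Fin[where 'a='a, of c] by simp
  have "\<And>m. m dvd N \<Longrightarrow> 2 * place_val (Fin c) (poly (Fm m) (-\<alpha>)) = 2 ^ m * (2 * place_val (Fin c) \<alpha>)"
  proof -
    fix m assume "m dvd N"
    hence "m \<ge> 1" using N by (cases m) auto
    thus "2 * place_val (Fin c) (poly (Fm m) (-\<alpha>)) = 2 ^ m * (2 * place_val (Fin c) \<alpha>)"
      using pole_val[OF a t] by simp
  qed
  from neg_val[OF N _ this] pv a show ?thesis by simp
qed

lemma reg_g:
  fixes \<alpha> :: "'a::field poly fract"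
  assumes r: "reg c \<alpha>"
  shows "reg c (poly (Fm m) (-\<alpha>)) \<and>
    ev c (poly (Fm m) (-\<alpha>)) = ((\<lambda>w. w^2 + c) ^^ m) (- ev c \<alpha>) - (- ev c \<alpha>)"
proof -
  have rz: "reg c (-\<alpha>) \<and> ev c (-\<alpha>) = - ev c \<alpha>" using reg_uminus[OF r] .
  have rf: "reg c (poly (fiter m) (-\<alpha>)) \<and> ev c (poly (fiter m) (-\<alpha>)) = ((\<lambda>w. w^2 + c) ^^ m) (- ev c \<alpha>)"
    using reg_fiter[OF conjunct1[OF rz], of m] rz by simp
  show ?thesis using reg_diff[OF conjunct1[OF rf] conjunct1[OF rz]] rf rz by (simp add: poly_Fm)
qed

lemma e_facts:
  fixes \<alpha> :: "'a::field poly fract"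
  assumes r: "reg c \<alpha>" and m: "m \<ge> 1"
  shows "place_val (Fin c) (poly (Fm m) (-\<alpha>)) \<ge> 0 \<and>
    (place_val (Fin c) (poly (Fm m) (-\<alpha>)) > 0 \<longleftrightarrow> ((\<lambda>w. w^2 + c) ^^ m) (- ev c \<alpha>) = - ev c \<alpha>)"
proof -
  have nz: "poly (Fm m) (-\<alpha>) \<noteq> 0" using Fm_nonzero[OF m] .
  have rg: "reg c (poly (Fm m) (-\<alpha>))" using reg_g[OF r] by blast
  show ?thesis using reg_iff_pv[OF nz, of c] rg reg_pv_pos[OF rg nz] reg_g[OF r, of m] by (simp add: eq_neg_iff_add_eq_0)
qed



lemma realize_iff:
  fixes \<alpha> :: "'a::field_char_0 poly fract"
  shows "realizes_portrait \<alpha> 1 N \<longleftrightarrow>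
    (\<exists>c. reg c \<alpha> \<and> exact_period (\<lambda>z. z^2 + c) (- ev c \<alpha>) N \<and> ev c \<alpha> \<noteq> 0)"
proof
  assume "realizes_portrait \<alpha> 1 N"
  then obtain c p q where h: "q \<noteq> 0" "poly q c \<noteq> 0" "\<alpha> = Fract p q"
      "has_portrait (\<lambda>z. z\<^sup>2 + c) (poly p c / poly q c) 1 N"
    by (auto simp: realizes_portrait_def)
  have r: "reg c \<alpha> \<and> ev c \<alpha> = poly p c / poly q c" using ev_Fract[OF h(2)] h(3) by simp
  thus "\<exists>c. reg c \<alpha> \<and> exact_period (\<lambda>z. z^2 + c) (- ev c \<alpha>) N \<and> ev c \<alpha> \<noteq> 0"
    using h(4) portrait_iff[of c "poly p c / poly q c" N] by auto
next
  assume "\<exists>c. reg c \<alpha> \<and> exact_period (\<lambda>z. z^2 + c) (- ev c \<alpha>) N \<and> ev c \<alpha> \<noteq> 0"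
  then obtain c where c: "reg c \<alpha>" "exact_period (\<lambda>z. z^2 + c) (- ev c \<alpha>) N" "ev c \<alpha> \<noteq> 0" by blast
  obtain p q where pq: "poly q c \<noteq> 0" "\<alpha> = Fract p q" "ev c \<alpha> = poly p c / poly q c"
    using regE[OF c(1)] by blast
  have "has_portrait (\<lambda>z. z\<^sup>2 + c) (poly p c / poly q c) 1 N"
    using portrait_iff[of c "poly p c / poly q c" N] c pq by simp
  moreover have "q \<noteq> 0" using pq by auto
  ultimately show "realizes_portrait \<alpha> 1 N" using pq unfolding realizes_portrait_def by blast
qed

theorem corollary5p8:
  fixes \<alpha> :: "'a::{alg_closed_field, field_char_0} poly fract"
    and N :: nat
  assumes "N \<ge> 1"
  shows "\<not> realizes_portrait \<alpha> 1 N \<longleftrightarrow>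
    (\<forall>P. vanishes_at P (poly (dynatomic N) (- \<alpha>)) \<longrightarrow>
       ((\<exists>n. n dvd N \<and> n < N \<and> vanishes_at P (poly (dynatomic n) (- \<alpha>)))
        \<or> vanishes_at P \<alpha>))"
proof -
  have N: "N \<ge> 1" by fact
  have ge1: "m \<ge> 1" if "m dvd n" "n \<ge> 1" for m n :: nat using that by (cases m) auto
  have phi: "poly (dynatomic n) (-\<alpha>) \<noteq> 0 \<and> place_val P (poly (dynatomic n) (-\<alpha>)) =
      (\<Sum>m\<in>Aset n. place_val P (poly (Fm m) (-\<alpha>))) - (\<Sum>m\<in>Bset n. place_val P (poly (Fm m) (-\<alpha>)))"
    if "n \<ge> 1" for n P
    using phi_val[OF that, of "-\<alpha>" P] Fm_nonzero_dvd[OF that] by blast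
  show ?thesis
  proof
    assume nr: "\<not> realizes_portrait \<alpha> 1 N"
    show "\<forall>P. vanishes_at P (poly (dynatomic N) (- \<alpha>)) \<longrightarrow>
       ((\<exists>n. n dvd N \<and> n < N \<and> vanishes_at P (poly (dynatomic n) (- \<alpha>))) \<or> vanishes_at P \<alpha>)"
    proof (intro allI impI)
      fix P assume V: "vanishes_at P (poly (dynatomic N) (- \<alpha>))"
      have pos: "place_val P (poly (dynatomic N) (- \<alpha>)) > 0"
        using V phi[OF N, of P] by (simp add: vanishes_at_def)
      show "(\<exists>n. n dvd N \<and> n < N \<and> vanishes_at P (poly (dynatomic n) (- \<alpha>))) \<or> vanishes_at P \<alpha>"
      proof (cases P)
        case Inf
        thus ?thesis using pos Inf_neg[OF N, of \<alpha>] by simp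
      next
        case (Fin c)
        show ?thesis
        proof (cases "reg c \<alpha>")
          case False
          hence a0: "\<alpha> \<noteq> 0" using reg_0[of c] by auto
          hence "place_val (Fin c) \<alpha> < 0" using False reg_iff_pv[OF a0, of c] by simp
          thus ?thesis using pos Fin Fin_pole_neg[OF N a0, of c] by simp
        next
          case r: True
          show ?thesis
          proof (cases "ev c \<alpha> = 0")
            case True
            have "vanishes_at (Fin c) \<alpha>"
            proof (cases "\<alpha> = 0")
              case True thus ?thesis by (simp add: vanishes_at_def)
            next
              case False thus ?thesis using reg_pv_pos[OF r False] \<open>ev c \<alpha> = 0\<close>
                by (simp add: vanishes_at_def)
            qed
            thus ?thesis using Fin by simp
          next
            case ev0: False
            define \<phi> where "\<phi> = (\<lambda>w::'a. w^2 + c)"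
            define y where "y = - ev c \<alpha>"
            define e where "e = (\<lambda>m. place_val (Fin c) (poly (Fm m) (-\<alpha>)))"
            have ef: "e m \<ge> 0 \<and> (e m > 0 \<longleftrightarrow> (\<phi> ^^ m) y = y)" if "m \<ge> 1" for m
              using e_facts[OF r that] by (simp add: e_def \<phi>_def y_def)
            have pvN: "place_val (Fin c) (poly (dynatomic N) (- \<alpha>)) = (\<Sum>m\<in>Aset N. e m) - (\<Sum>m\<in>Bset N. e m)"
              using phi[OF N, of "Fin c"] by (simp add: e_def)
            have "\<exists>m. m dvd N \<and> (\<phi> ^^ m) y = y"
            proof (rule ccontr)
              assume "\<not> ?thesis"
              hence "e m = 0" if "m dvd N" for m using ef[OF ge1[OF that N]] that by force
              hence "(\<Sum>m\<in>Aset N. e m) - (\<Sum>m\<in>Bset N. e m) = 0" by (intro sum_zero) auto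
              thus False using pos pvN Fin by simp
            qed
            then obtain m0 where m0: "m0 dvd N" "(\<phi> ^^ m0) y = y" by blast
            have m0p: "m0 > 0" using ge1[OF m0(1) N] by simp
            obtain n where n: "n > 0" "exact_period \<phi> y n" "\<And>m. (\<phi> ^^ m) y = y \<longleftrightarrow> n dvd m"
              using least_period[OF m0(2) m0p] by blast
            have nN: "n dvd N" using n(3) m0 dvd_trans by blast
            show ?thesis
            proof (cases "n = N")
              case True
              have "realizes_portrait \<alpha> 1 N"
                using realize_iff[of \<alpha> N] r n(2) True ev0 by (auto simp: \<phi>_def y_def)
              thus ?thesis using nr by simp
            next
              case False
              have nlt: "n < N" using False nN N dvd_imp_le[OF nN] by simp
              have n1: "n \<ge> 1" using n(1) by simp
              have "(\<Sum>m\<in>Aset n. e m) - (\<Sum>m\<in>Bset n. e m) = e n"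
              proof (rule sum_single[OF n1])
                fix m assume m: "m dvd n" "m \<noteq> n"
                have m1: "m \<ge> 1" using ge1[OF m(1) n1] .
                have "m < n" using m dvd_imp_le[OF m(1)] n by simp
                hence "\<not> n dvd m" using m1 by (auto dest: dvd_imp_le)
                thus "e m = 0" using ef[OF m1] n(3)[of m] by simp
              qed
              moreover have "e n > 0" using ef[OF n1] n(3)[of n] by simp
              ultimately have "place_val (Fin c) (poly (dynatomic n) (- \<alpha>)) > 0"
                using phi[OF n1, of "Fin c"] by (simp add: e_def)
              hence "vanishes_at P (poly (dynatomic n) (- \<alpha>))" using Fin by (simp add: vanishes_at_def)
              thus ?thesis using nN nlt by blast
            qed
          qed
        qed
      qed
    qed
  next
    assume B: "\<forall>P. vanishes_at P (poly (dynatomic N) (- \<alpha>)) \<longrightarrow>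
       ((\<exists>n. n dvd N \<and> n < N \<and> vanishes_at P (poly (dynatomic n) (- \<alpha>))) \<or> vanishes_at P \<alpha>)"
    show "\<not> realizes_portrait \<alpha> 1 N"
    proof
      assume "realizes_portrait \<alpha> 1 N"
      then obtain c where c: "reg c \<alpha>" "exact_period (\<lambda>z. z^2 + c) (- ev c \<alpha>) N" "ev c \<alpha> \<noteq> 0"
        using realize_iff[of \<alpha> N] by blast
      define \<phi> where "\<phi> = (\<lambda>w::'a. w^2 + c)"
      define y where "y = - ev c \<alpha>"
      define e where "e = (\<lambda>m. place_val (Fin c) (poly (Fm m) (-\<alpha>)))"
      have ep: "exact_period \<phi> y N" using c(2) by (simp add: \<phi>_def y_def)
      have per: "(\<phi> ^^ m) y = y \<longleftrightarrow> N dvd m" for m using exact_period_dvd[OF ep] .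
      have ef: "e m \<ge> 0 \<and> (e m > 0 \<longleftrightarrow> (\<phi> ^^ m) y = y)" if "m \<ge> 1" for m
        using e_facts[OF c(1) that] by (simp add: e_def \<phi>_def y_def)
      have "(\<Sum>m\<in>Aset N. e m) - (\<Sum>m\<in>Bset N. e m) = e N"
      proof (rule sum_single[OF N])
        fix m assume m: "m dvd N" "m \<noteq> N"
        have m1: "m \<ge> 1" using ge1[OF m(1) N] .
        have "m < N" using m dvd_imp_le[OF m(1)] N by simp
        hence "\<not> N dvd m" using m1 by (auto dest: dvd_imp_le)
        thus "e m = 0" using ef[OF m1] per[of m] by simp
      qed
      moreover have "e N > 0" using ef[OF N] per[of N] by simp
      ultimately have "place_val (Fin c) (poly (dynatomic N) (- \<alpha>)) > 0"
        using phi[OF N, of "Fin c"] by (simp add: e_def)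
      hence "vanishes_at (Fin c) (poly (dynatomic N) (- \<alpha>))" by (simp add: vanishes_at_def)
      with B have "(\<exists>n. n dvd N \<and> n < N \<and> vanishes_at (Fin c) (poly (dynatomic n) (- \<alpha>)))
          \<or> vanishes_at (Fin c) \<alpha>" by blast
      thus False
      proof
        assume "\<exists>n. n dvd N \<and> n < N \<and> vanishes_at (Fin c) (poly (dynatomic n) (- \<alpha>))"
        then obtain n where n: "n dvd N" "n < N" "vanishes_at (Fin c) (poly (dynatomic n) (- \<alpha>))" by blast
        have n1: "n \<ge> 1" using ge1[OF n(1) N] .
        have "(\<Sum>m\<in>Aset n. e m) - (\<Sum>m\<in>Bset n. e m) = 0"
        proof (rule sum_zero)
          fix m assume m: "m dvd n"
          have m1: "m \<ge> 1" using ge1[OF m n1] .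
          have "m < N" using dvd_imp_le[OF m] n1 n(2) by simp
          hence "\<not> N dvd m" using m1 by (auto dest: dvd_imp_le)
          thus "e m = 0" using ef[OF m1] per[of m] by simp
        qed
        hence "place_val (Fin c) (poly (dynatomic n) (- \<alpha>)) = 0"
          using phi[OF n1, of "Fin c"] by (simp add: e_def)
        thus False using n(3) phi[OF n1, of "Fin c"] by (simp add: vanishes_at_def)
      next
        assume va: "vanishes_at (Fin c) \<alpha>"
        show False
        proof (cases "\<alpha> = 0")
          case True thus False using c(3) reg_0[of c] by simp
        next
          case False
          hence "place_val (Fin c) \<alpha> > 0" using va by (simp add: vanishes_at_def)
          thus False using reg_pv_pos[OF c(1) False] c(3) by simp
        qed
      qed
    qed
  qed
qed


end
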